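(* Let $q\in\mathbb C\setminus\{0\}$ not be a root of unity and let $B$ be braided $SL_q(2)$ with generators $u,x,y,z$, regarded as an ordinary algebra, and let $\mathbb C$ be a left $B$-module via $\varepsilon$. Writing elements of $B^3$ as row vectors, the sequence of left $B$-module maps $$0\to B\xrightarrow{\varphi_3}B^3\xrightarrow{\varphi_2}B^3\xrightarrow{\varphi_1}B\xrightarrow{\varphi_0}\mathbb C\to0,$$ $\varphi_0(f)=\varepsilon(f)$, $\varphi_1(f,g,h)=fx+gy+h(u-1)$, $\varphi_3(f)=(fy,\,-q^2fx,\,f(u-1))$, and $$\varphi_2(f,g,h)=(f,g,h)\begin{pmatrix}q^{-2}u&0&-x\\0&q^2u-1&-y\\-y&q^2x&(1-q^2)(u+1)\end{pmatrix},$$ is exact, i.e. a free resolution of $\mathbb C$.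
   Context: $B$ is the transmutation of $H=\mathbb C_q[SL(2)]$: the vector space $H$ with product $f*g=f_{(2)}g_{(2)}\mathbf r(S(f_{(1)})f_{(3)},S(g_{(1)}))$ (written as juxtaposition), where $H$ has generators $a,b,c,d$ with $ab=qba$, $ac=qca$, $bd=qdb$, $cd=qdc$, $bc=cb$, $ad-qbc=1$, $da-q^{-1}bc=1$, matrix coproduct, and $\mathbf r$ is the universal r-form determined multiplicatively by $\mathbf r(a,a)=\mathbf r(d,d)=q^{1/2}$, $\mathbf r(a,d)=\mathbf r(d,a)=q^{-1/2}$, $\mathbf r(c,b)=q^{-1/2}(q-q^{-1})$, other generator values $0$. $B$ is generated by $u=d$, $x=qb$, $y=qc$, $z=(qa-qd)/(q+q^{-1})$ with relations $ux=q^2xu$, $uy=q^{-2}yu$, $zu=uz$, $xy=u^2+(1+q^{-2})uz-1$, $yx=u^2+(1+q^2)uz-1$, $zx=xz+(1-q^2)xu$, $zy=yz+(1-q^{-2})yu$; counit $\varepsilon(u)=1$, $\varepsilon(x)=\varepsilon(y)=\varepsilon(z)=0$ (an algebra map). *)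

theory Defs
  imports Complex_Main "HOL-Library.Poly_Mapping"
begin

datatype gen = U | X | Y | Z

datatype word = Word "gen list"

instantiation word :: monoid_add
begin
definition zero_word :: word where "zero_word = Word []"
fun plus_word :: "word \<Rightarrow> word \<Rightarrow> word" where
  "plus_word (Word a) (Word b) = Word (a @ b)"
instance
proof
  fix a b c :: word
  show "a + b + c = a + (b + c)" by (cases a; cases b; cases c) simp
  show "0 + a = a" by (cases a) (simp add: zero_word_def)
  show "a + 0 = a" by (cases a) (simp add: zero_word_def)
qed
end

text \<open>The free associative unital complex algebra on u, x, y, z: finitely supported
  complex combinations of words, with convolution product (a ring_1).\<close>
type_synonym freealg = "word \<Rightarrow>\<^sub>0 complex"

definition sc :: "complex \<Rightarrow> freealg" where
  "sc c = Poly_Mapping.single 0 c"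

definition gen_el :: "gen \<Rightarrow> freealg" where
  "gen_el g = Poly_Mapping.single (Word [g]) 1"

abbreviation "gu \<equiv> gen_el U"
abbreviation "gx \<equiv> gen_el X"
abbreviation "gy \<equiv> gen_el Y"
abbreviation "gz \<equiv> gen_el Z"

definition bsl_rels :: "complex \<Rightarrow> freealg set" where
  "bsl_rels q = {
     gu * gx - sc (q^2) * gx * gu,
     gu * gy - sc (inverse (q^2)) * gy * gu,
     gz * gu - gu * gz,
     gx * gy - (gu * gu + sc (1 + inverse (q^2)) * gu * gz - 1),
     gy * gx - (gu * gu + sc (1 + q^2) * gu * gz - 1),
     gz * gx - (gx * gz + sc (1 - q^2) * gx * gu),
     gz * gy - (gy * gz + sc (1 - inverse (q^2)) * gy * gu) }"

inductive_set bsl_ideal :: "complex \<Rightarrow> freealg set" for q :: complex where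
  rel: "r \<in> bsl_rels q \<Longrightarrow> r \<in> bsl_ideal q"
| zero: "0 \<in> bsl_ideal q"
| add: "a \<in> bsl_ideal q \<Longrightarrow> b \<in> bsl_ideal q \<Longrightarrow> a + b \<in> bsl_ideal q"
| mult: "a \<in> bsl_ideal q \<Longrightarrow> l * a * r \<in> bsl_ideal q"

text \<open>B = freealg / bsl_ideal q.  Elements of B are represented by elements of freealg;
  two representatives are equal in B iff their difference lies in the ideal.\<close>

definition beq :: "complex \<Rightarrow> freealg \<Rightarrow> freealg \<Rightarrow> bool" where
  "beq q a b \<longleftrightarrow> a - b \<in> bsl_ideal q"

definition beq3 :: "complex \<Rightarrow> freealg \<times> freealg \<times> freealg \<Rightarrow> freealg \<times> freealg \<times> freealg \<Rightarrow> bool" where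
  "beq3 q v w \<longleftrightarrow> (case v of (a1, a2, a3) \<Rightarrow> case w of (b1, b2, b3) \<Rightarrow>
      beq q a1 b1 \<and> beq q a2 b2 \<and> beq q a3 b3)"

definition gen_eps :: "gen \<Rightarrow> complex" where
  "gen_eps g = (if g = U then 1 else 0)"

fun word_eps :: "word \<Rightarrow> complex" where
  "word_eps (Word ws) = prod_list (map gen_eps ws)"

definition eps :: "freealg \<Rightarrow> complex" where
  "eps f = (\<Sum>w\<in>Poly_Mapping.keys f. Poly_Mapping.lookup f w * word_eps w)"

definition phi1 :: "freealg \<times> freealg \<times> freealg \<Rightarrow> freealg" where
  "phi1 v = (case v of (f, g, h) \<Rightarrow> f * gx + g * gy + h * (gu - 1))"

text \<open>Row vector (f,g,h) times the matrix
  [[q^-2 u - 1, 0, -x], [0, q^2 u - 1, -y], [-y, q^2 x, (1-q^2)(u+1)]].\<close>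
definition phi2 :: "complex \<Rightarrow> freealg \<times> freealg \<times> freealg \<Rightarrow> freealg \<times> freealg \<times> freealg" where
  "phi2 q v = (case v of (f, g, h) \<Rightarrow>
     ( f * (sc (inverse (q^2)) * gu - 1) - h * gy,
       g * (sc (q^2) * gu - 1) + h * (sc (q^2) * gx),
       - (f * gx) - g * gy + h * (sc (1 - q^2) * (gu + 1))))"

definition phi3 :: "complex \<Rightarrow> freealg \<Rightarrow> freealg \<times> freealg \<times> freealg" where
  "phi3 q f = (f * gy, - (sc (q^2) * f * gx), f * (gu - 1))"

end

theory Submission
  imports Defs "HOL-Computational_Algebra.Polynomial" "HOL-Library.Function_Algebras"
begin

lemma pm_induct[case_names zero add]:
  fixes P :: "freealg \<Rightarrow> bool"
  assumes "P 0" and "\<And>f w c. P f \<Longrightarrow> P (Poly_Mapping.single w c + f)"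
  shows "P f"
proof (induction f rule: Poly_Mapping.update_induct)
  case const then show ?case using assms(1) by simp
next
  case (update f a b)
  have "Poly_Mapping.update a b f = Poly_Mapping.single a b + f"
    using update(1)
    by (intro poly_mapping_eqI) (auto simp: lookup_update lookup_add lookup_single in_keys_iff when_def)
  then show ?case using assms(2) update by simp
qed

lemma sc_mult: "sc a * sc b = sc (a * b)"
  by (simp add: sc_def mult_single)
lemma sc_add: "sc a + sc b = sc (a + b)"
  by (simp add: sc_def single_add)
lemma sc_diff: "sc a - sc b = sc (a - b)"
  by (simp add: sc_def single_diff)
lemma sc_uminus: "- sc a = sc (- a)"
  by (simp add: sc_def single_uminus)
lemma sc_0[simp]: "sc 0 = 0" by (simp add: sc_def)
lemma sc_1[simp]: "sc 1 = 1" by (simp add: sc_def)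

lemma sc_central: "sc c * x = x * sc c"
proof (induction x rule: pm_induct)
  case zero then show ?case by simp
next
  case (add f w d)
  have "sc c * Poly_Mapping.single w d = Poly_Mapping.single w d * sc c"
    by (simp add: sc_def mult_single mult.commute)
  then show ?case using add by (simp add: distrib_left distrib_right)
qed

lemma single_word_cons: "Poly_Mapping.single (Word (g # gs)) c = gen_el g * Poly_Mapping.single (Word gs) c"
  by (simp add: gen_el_def mult_single)

lemma single_word_nil: "Poly_Mapping.single (Word []) c = sc c"
  by (simp add: sc_def zero_word_def)

lemma I_neg: "a \<in> bsl_ideal q \<Longrightarrow> - a \<in> bsl_ideal q"
  by (drule bsl_ideal.mult[where l="-1" and r=1]) simp
lemma I_diff: "a \<in> bsl_ideal q \<Longrightarrow> b \<in> bsl_ideal q \<Longrightarrow> a - b \<in> bsl_ideal q"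
  unfolding diff_conv_add_uminus by (intro bsl_ideal.add I_neg)
lemma I_lmult: "a \<in> bsl_ideal q \<Longrightarrow> l * a \<in> bsl_ideal q"
  by (drule bsl_ideal.mult[where l=l and r=1]) simp
lemma I_rmult: "a \<in> bsl_ideal q \<Longrightarrow> a * r \<in> bsl_ideal q"
  by (drule bsl_ideal.mult[where l=1 and r=r]) simp

lemma beq_refl[simp]: "beq q a a" by (simp add: beq_def bsl_ideal.zero)
lemma beq_sym: "beq q a b \<Longrightarrow> beq q b a"
  unfolding beq_def using I_neg by fastforce
lemma beq_trans: "beq q a b \<Longrightarrow> beq q b c \<Longrightarrow> beq q a c"
  unfolding beq_def using bsl_ideal.add by fastforce
lemma beq_add: "beq q a b \<Longrightarrow> beq q c d \<Longrightarrow> beq q (a + c) (b + d)"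
  unfolding beq_def using bsl_ideal.add by (fastforce simp: algebra_simps)
lemma beq_diff: "beq q a b \<Longrightarrow> beq q c d \<Longrightarrow> beq q (a - c) (b - d)"
  unfolding beq_def using I_diff by (fastforce simp: algebra_simps)
lemma beq_lmult: "beq q a b \<Longrightarrow> beq q (l * a) (l * b)"
  unfolding beq_def using I_lmult by (fastforce simp: algebra_simps)
lemma beq_rmult: "beq q a b \<Longrightarrow> beq q (a * r) (b * r)"
  unfolding beq_def using I_rmult by (fastforce simp: algebra_simps)
lemma beq_rel: "r \<in> bsl_rels q \<Longrightarrow> r = a - b \<Longrightarrow> beq q a b"
  unfolding beq_def using bsl_ideal.rel by simp


lemma eps_add: "eps (f + g) = eps f + eps g"
  unfolding eps_def
  by (rule setsum_keys_plus_distrib) (auto simp: distrib_right)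

lemma eps_zero[simp]: "eps 0 = 0" by (simp add: eps_def)

lemma eps_single[simp]: "eps (Poly_Mapping.single w c) = c * word_eps w"
  by (cases "c = 0") (simp_all add: eps_def)

lemma eps_uminus: "eps (- f) = - eps f"
  using eps_add[of f "-f"] by (simp add: eq_neg_iff_add_eq_0 add.commute)
lemma eps_diff: "eps (f - g) = eps f - eps g"
  using eps_add[of f "-g"] eps_uminus[of g] by simp

lemma word_eps_plus: "word_eps (a + b) = word_eps a * word_eps b"
  by (cases a; cases b) simp

lemma eps_mult: "eps (f * g) = eps f * eps g"
proof (induction f rule: pm_induct)
  case zero then show ?case by simp
next
  case (add f w c)
  have "eps (Poly_Mapping.single w c * g) = c * word_eps w * eps g"
  proof (induction g rule: pm_induct)
    case zero then show ?case by simp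
  next
    case (add g w' c')
    then show ?case by (simp add: distrib_left eps_add mult_single word_eps_plus algebra_simps)
  qed
  then show ?case using add by (simp add: distrib_right eps_add algebra_simps)
qed

lemma eps_sc[simp]: "eps (sc c) = c"
  by (simp add: sc_def zero_word_def)
lemma eps_one[simp]: "eps 1 = 1"
  using eps_sc[of 1] by simp
lemma eps_gen[simp]: "eps (gen_el g) = gen_eps g"
  by (simp add: gen_el_def)

lemma eps_ideal: "a \<in> bsl_ideal q \<Longrightarrow> eps a = 0"
proof (induction rule: bsl_ideal.induct)
  case (rel r)
  then show ?case
    by (auto simp: bsl_rels_def eps_diff eps_add eps_mult gen_eps_def)
next
  case zero then show ?case by simp
next
  case (add a b) then show ?case by (simp add: eps_add)
next
  case (mult a l r) then show ?case by (simp add: eps_mult)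
qed


type_synonym A = "complex poly poly"
type_synonym V = "int \<Rightarrow> A"

definition C :: "complex \<Rightarrow> A" where "C c = [:[:c:]:]"
definition Uu :: A where "Uu = [:0, 1:]"
definition Ww :: A where "Ww = [:[:0, 1:]:]"

lemma C_mult: "C (a * b) = C a * C b" by (simp add: C_def)
lemma C_add: "C (a + b) = C a + C b" by (simp add: C_def)
lemma C_diff: "C (a - b) = C a - C b" by (simp add: C_def)
lemma C_uminus: "C (- a) = - C a" by (simp add: C_def)
lemma C_0[simp]: "C 0 = 0" by (simp add: C_def)
lemma C_1[simp]: "C 1 = 1" by (simp add: C_def one_pCons)
lemma C_eq_0[simp]: "C a = 0 \<longleftrightarrow> a = 0" by (simp add: C_def)

declare plus_fun_apply[simp del] zero_fun_apply[simp del] minus_apply[simp del] uminus_apply[simp del]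
lemmas fun_ops = plus_fun_apply zero_fun_apply minus_apply uminus_apply

lemma vsum_apply: "(sum F S) n = sum (\<lambda>x. F x n) S"
  by (induction S rule: infinite_finite_induct) (auto simp: fun_ops)

definition csm :: "complex \<Rightarrow> V \<Rightarrow> V" where "csm c v = (\<lambda>n. C c * v n)"

lemma csm_apply: "csm c v n = C c * v n" by (simp add: csm_def)
lemma csm_add: "csm c (v + w) = csm c v + csm c w" by (simp add: fun_eq_iff fun_ops algebra_simps csm_apply)
lemma csm_add2: "csm (c + d) v = csm c v + csm d v" by (simp add: fun_eq_iff fun_ops algebra_simps C_add csm_apply)
lemma csm_0[simp]: "csm 0 v = 0" by (simp add: fun_eq_iff fun_ops csm_apply)
lemma csm_0'[simp]: "csm c 0 = 0" by (simp add: fun_eq_iff fun_ops csm_apply)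
lemma csm_csm: "csm c (csm d v) = csm (c * d) v" by (simp add: fun_eq_iff fun_ops C_mult csm_apply)
lemma csm_sum: "csm c (sum F S) = sum (\<lambda>x. csm c (F x)) S"
  by (simp add: fun_eq_iff fun_ops vsum_apply sum_distrib_left csm_apply)

definition linop :: "(V \<Rightarrow> V) \<Rightarrow> bool" where
  "linop T \<longleftrightarrow> (\<forall>v w. T (v + w) = T v + T w) \<and> (\<forall>c v. T (csm c v) = csm c (T v))"

lemma linop_add: "linop T \<Longrightarrow> T (v + w) = T v + T w" by (simp add: linop_def)
lemma linop_csm: "linop T \<Longrightarrow> T (csm c v) = csm c (T v)" by (simp add: linop_def)
lemma linop_0: "linop T \<Longrightarrow> T 0 = 0"
  using linop_add[of T 0 0] by simp
lemma linop_sum: "linop T \<Longrightarrow> T (sum F S) = sum (\<lambda>x. T (F x)) S"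
  by (induction S rule: infinite_finite_induct) (auto simp: linop_0 linop_add)
lemma linop_comp: "linop T \<Longrightarrow> linop T' \<Longrightarrow> linop (T \<circ> T')"
  by (simp add: linop_def)
lemma linop_id: "linop id" by (simp add: linop_def)
lemma linop_uminus: "linop T \<Longrightarrow> T (- v) = - T v"
  using linop_add[of T v "-v"] linop_0[of T] by (simp add: eq_neg_iff_add_eq_0 add.commute)
lemma linop_diff: "linop T \<Longrightarrow> T (v - w) = T v - T w"
  using linop_add[of T v "-w"] linop_uminus[of T w] by simp

locale bsl =
  fixes q :: complex
  assumes q0: "q \<noteq> 0" and q2: "1 + q^2 \<noteq> 0"
begin

definition Qp :: "int \<Rightarrow> complex" where "Qp n = (q^2) powi n"

lemma Qp_0[simp]: "Qp 0 = 1" by (simp add: Qp_def)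
lemma Qp_1[simp]: "Qp 1 = q^2" by (simp add: Qp_def)
lemma Qp_Suc: "Qp (n + 1) = q^2 * Qp n"
  using q0 by (simp add: Qp_def power_int_add_1')
lemma Qp_ne0: "Qp n \<noteq> 0" using q0 by (simp add: Qp_def)

definition S :: "int \<Rightarrow> A" where
  "S n = - C (inverse (q^2) * (Qp n)^2) * Uu^2 + C ((1 + inverse (q^2)) * Qp n) * Uu * Ww - 1"

definition cX :: "int \<Rightarrow> A" where "cX n = (if 1 \<le> n then 1 else S n)"
definition cY :: "int \<Rightarrow> A" where "cY n = (if n \<le> -1 then 1 else S (n + 1))"

definition L :: "gen \<Rightarrow> V \<Rightarrow> V" where
  "L g v = (case g of
     U \<Rightarrow> (\<lambda>n. C (Qp n) * Uu * v n)
   | Z \<Rightarrow> (\<lambda>n. (Ww - C (Qp n) * Uu) * v n)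
   | X \<Rightarrow> (\<lambda>n. cX n * v (n - 1))
   | Y \<Rightarrow> (\<lambda>n. cY n * v (n + 1)))"

lemma L_simps:
  "L U v n = C (Qp n) * Uu * v n"
  "L Z v n = (Ww - C (Qp n) * Uu) * v n"
  "L X v n = cX n * v (n - 1)"
  "L Y v n = cY n * v (n + 1)"
  by (simp_all add: L_def)

lemma linop_L: "linop (L g)"
  by (cases g) (simp_all add: linop_def L_def fun_eq_iff fun_ops algebra_simps csm_apply)

fun actw :: "word \<Rightarrow> V \<Rightarrow> V" where "actw (Word gs) = foldr L gs"

lemma linop_actw: "linop (actw w)"
proof (cases w)
  case (Word gs)
  show ?thesis unfolding Word
  proof (induction gs)
    case Nil then show ?case by (simp add: linop_def)
  next
    case (Cons a gs)
    then show ?case using linop_comp[OF linop_L[of a] Cons] by (simp add: comp_def)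
  qed
qed

lemma actw_plus: "actw (a + b) = actw a \<circ> actw b"
  by (cases a; cases b) (simp add: fun_eq_iff fun_ops)

lemma actw_0[simp]: "actw w 0 = 0" by (rule linop_0[OF linop_actw])

definition Act :: "freealg \<Rightarrow> V \<Rightarrow> V" where
  "Act f v = (\<Sum>w\<in>Poly_Mapping.keys f. csm (Poly_Mapping.lookup f w) (actw w v))"

lemma Act_add: "Act (f + g) v = Act f v + Act g v"
  unfolding Act_def
  by (rule setsum_keys_plus_distrib) (auto simp: csm_add2)

lemma Act_zero[simp]: "Act 0 v = 0" by (simp add: Act_def)

lemma Act_single: "Act (Poly_Mapping.single w c) v = csm c (actw w v)"
  by (cases "c = 0") (simp_all add: Act_def)

lemma linop_Act: "linop (Act f)"
  unfolding linop_def Act_def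
  by (simp add: linop_add[OF linop_actw] linop_csm[OF linop_actw] csm_add sum.distrib csm_sum csm_csm mult.commute)

lemma Act_mult: "Act (f * g) v = Act f (Act g v)"
proof (induction f rule: pm_induct)
  case zero then show ?case by simp
next
  case (add f w c)
  have "Act (Poly_Mapping.single w c * g) v = Act (Poly_Mapping.single w c) (Act g v)"
  proof (induction g rule: pm_induct)
    case zero
    have "Act (Poly_Mapping.single w c) 0 = 0" by (simp only: Act_single actw_0 csm_0')
    then show ?case by (simp only: mult_zero_right Act_zero)
  next
    case (add g w' c')
    then show ?case
      by (simp add: distrib_left Act_add mult_single Act_single actw_plus
          linop_add[OF linop_actw] linop_csm[OF linop_actw] csm_add csm_csm)
  qed
  then show ?case using add by (simp add: distrib_right Act_add)
qed

lemma Act_uminus: "Act (- f) v = - Act f v"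
  using Act_add[of f "-f" v] by (simp add: eq_neg_iff_add_eq_0 add.commute)
lemma Act_diff: "Act (f - g) v = Act f v - Act g v"
  using Act_add[of f "-g" v] Act_uminus[of g v] by simp

lemma Act_sc: "Act (sc c) v = csm c v"
  by (simp add: sc_def Act_single zero_word_def)
lemma Act_one: "Act 1 v = v"
  using Act_sc[of 1 v] by (simp add: fun_eq_iff fun_ops csm_apply)
lemma Act_gen: "Act (gen_el g) v = L g v"
  by (simp add: gen_el_def Act_single fun_eq_iff fun_ops csm_apply)

end

lemma C_power: "C (a ^ k) = C a ^ k" by (induction k) (simp_all add: C_mult)
lemma C_inv_q: "q \<noteq> 0 \<Longrightarrow> C (inverse (q^2)) * C q ^ 2 = 1"
  by (simp flip: C_power C_mult)

lemmas Csimps = C_mult C_add C_diff C_uminus C_power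

context bsl
begin

lemma Qp_m1: "Qp (n - 1) = Qp n * inverse (q^2)"
  using Qp_Suc[of "n - 1"] q0 by (simp add: field_simps)

lemma qi: "C (inverse (q^2)) * C q ^ 2 = 1" using q0 by (rule C_inv_q)

lemmas Asimps = fun_eq_iff fun_ops Act_diff Act_add Act_mult Act_gen Act_sc Act_one csm_apply L_simps

lemma rel1: "Act (gu * gx - sc (q^2) * gx * gu) v = 0"
  apply (simp add: Asimps Qp_m1 Csimps)
  apply (intro allI disjI2)
  subgoal for x using qi by algebra
  done

lemma rel2: "Act (gu * gy - sc (inverse (q^2)) * gy * gu) v = 0"
  apply (simp add: Asimps Qp_Suc Csimps)
  using qi by simp

lemma rel3: "Act (gz * gu - gu * gz) v = 0"
  by (simp add: Asimps algebra_simps)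

lemma rel4: "Act (gx * gy - (gu * gu + sc (1 + inverse (q^2)) * gu * gz - 1)) v = 0"
  apply (simp add: Asimps cX_def cY_def S_def Csimps)
  apply (intro allI conjI impI)
  apply algebra+
  done

lemma rel5: "Act (gy * gx - (gu * gu + sc (1 + q^2) * gu * gz - 1)) v = 0"
  apply (simp add: Asimps cX_def cY_def S_def Qp_Suc Csimps)
  apply (intro allI conjI impI)
  subgoal for x using qi by algebra
  done

lemma rel6: "Act (gz * gx - (gx * gz + sc (1 - q^2) * gx * gu)) v = 0"
  apply (simp add: Asimps Qp_m1 Csimps)
  apply (intro allI conjI impI)
  subgoal for x using qi by algebra
  done

lemma rel7: "Act (gz * gy - (gy * gz + sc (1 - inverse (q^2)) * gy * gu)) v = 0"
  apply (simp add: Asimps Qp_Suc Csimps)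
  apply (intro allI conjI impI)
  subgoal for x using qi by algebra
  done


end

declare beq_trans[trans]

abbreviation "gw \<equiv> gz + gu"

definition embW :: "complex poly \<Rightarrow> freealg" where
  "embW r = fold_coeffs (\<lambda>c x. sc c + gw * x) r 0"

lemma embW_0[simp]: "embW 0 = 0" by (simp add: embW_def)

lemma embW_pCons: "embW (pCons c r) = sc c + gw * embW r"
proof (cases "c = 0 \<and> r = 0")
  case True then show ?thesis by (simp add: embW_def)
next
  case False
  then have "fold_coeffs (\<lambda>c x. sc c + gw * x) (pCons c r) = (\<lambda>x. sc c + gw * x) \<circ> fold_coeffs (\<lambda>c x. sc c + gw * x) r"
    by (auto simp del: fold_coeffs_pCons_eq)
  then show ?thesis by (simp add: embW_def)
qed

definition embA :: "A \<Rightarrow> freealg" where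
  "embA p = fold_coeffs (\<lambda>a x. embW a + gu * x) p 0"

lemma embA_0[simp]: "embA 0 = 0" by (simp add: embA_def)

lemma embA_pCons: "embA (pCons a p) = embW a + gu * embA p"
proof (cases "a = 0 \<and> p = 0")
  case True then show ?thesis by (simp add: embA_def)
next
  case False
  then have "fold_coeffs (\<lambda>a x. embW a + gu * x) (pCons a p) = (\<lambda>x. embW a + gu * x) \<circ> fold_coeffs (\<lambda>a x. embW a + gu * x) p"
    by (auto simp del: fold_coeffs_pCons_eq)
  then show ?thesis by (simp add: embA_def)
qed

lemma embW_add: "embW (r + r') = embW r + embW r'"
proof (induction r arbitrary: r' rule: pCons_induct)
  case 0 then show ?case by simp
next
  case (pCons c r)
  obtain c' s' where r': "r' = pCons c' s'" by (cases r')
  show ?case using pCons(2)[of s'] unfolding r'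
    by (simp add: embW_pCons sc_add[symmetric] distrib_left algebra_simps)
qed

lemma embW_smult: "embW (smult c r) = sc c * embW r"
proof (induction r rule: pCons_induct)
  case 0 then show ?case by simp
next
  case (pCons a r)
  have "sc c * (gw * embW r) = gw * (sc c * embW r)"
    by (metis mult.assoc sc_central)
  then show ?case using pCons(2)
    by (simp add: embW_pCons distrib_left sc_mult)
qed

lemma embA_add: "embA (p + p') = embA p + embA p'"
proof (induction p arbitrary: p' rule: pCons_induct)
  case 0 then show ?case by simp
next
  case (pCons c r)
  obtain c' s' where r': "p' = pCons c' s'" by (cases p')
  show ?case using pCons(2)[of s'] unfolding r'
    by (simp add: embA_pCons embW_add distrib_left algebra_simps)
qed

lemma embA_uminus: "embA (- p) = - embA p"
  using embA_add[of p "-p"] by (simp add: eq_neg_iff_add_eq_0 add.commute)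
lemma embA_diff: "embA (p - p') = embA p - embA p'"
  using embA_add[of p "-p'"] embA_uminus[of p'] by simp

lemma C_mult_poly: "C c * p = smult [:c:] p"
  by (simp add: C_def)

lemma embA_C: "embA (C c * p) = sc c * embA p"
  unfolding C_mult_poly
proof (induction p rule: pCons_induct)
  case 0 then show ?case by simp
next
  case (pCons a r)
  have "sc c * (gu * embA r) = gu * (sc c * embA r)"
    by (metis mult.assoc sc_central)
  moreover have "[:c:] * a = smult c a" by simp
  ultimately show ?case using pCons(2)
    by (simp add: embA_pCons distrib_left embW_smult)
qed

lemma Uu_mult: "Uu * p = pCons 0 p"
  by (simp add: Uu_def)

lemma embA_U: "embA (Uu * p) = gu * embA p"
  by (simp add: Uu_mult embA_pCons)

lemma embA_1: "embA 1 = 1"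
  by (simp add: one_pCons embA_pCons embW_pCons)

lemma Ww_mult: "Ww * p = smult [:0, 1:] p"
  by (simp add: Ww_def)

lemma rI: "r \<in> bsl_rels q \<Longrightarrow> r \<in> bsl_ideal q" by (rule bsl_ideal.rel)

lemma beq_gw_gu: "beq q (gw * gu) (gu * gw)"
proof -
  have "gw * gu - gu * gw = gz * gu - gu * gz" by (simp add: algebra_simps)
  moreover have "gz * gu - gu * gz \<in> bsl_ideal q" by (rule rI) (simp add: bsl_rels_def)
  ultimately show ?thesis by (simp add: beq_def)
qed

lemma embA_W: "beq q (gw * embA p) (embA (Ww * p))"
proof (induction p rule: pCons_induct)
  case 0 then show ?case by simp
next
  case (pCons a r)
  have e1: "gw * embW a = embW (pCons 0 a)" by (simp add: embW_pCons sc_0)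
  have "gw * embA (pCons a r) = gw * embW a + (gw * gu) * embA r"
    by (simp add: embA_pCons distrib_left mult.assoc)
  also have "beq q \<dots> (gw * embW a + (gu * gw) * embA r)"
    by (intro beq_add beq_refl beq_rmult beq_gw_gu)
  also have "gw * embW a + (gu * gw) * embA r = embW (pCons 0 a) + gu * (gw * embA r)"
    by (simp add: e1 mult.assoc)
  also have "beq q \<dots> (embW (pCons 0 a) + gu * embA (Ww * r))"
    by (intro beq_add beq_refl beq_lmult pCons(2))
  also have "embW (pCons 0 a) + gu * embA (Ww * r) = embA (Ww * pCons a r)"
  proof -
    have "[:0, 1:] * a = pCons 0 a" by simp
    then show ?thesis by (simp only: Ww_mult smult_pCons embA_pCons)
  qed
  finally show ?case .
qed


definition monoX :: "nat \<Rightarrow> A \<Rightarrow> freealg" where "monoX k p = gx ^ k * embA p"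
definition monoY :: "nat \<Rightarrow> A \<Rightarrow> freealg" where "monoY k p = gy ^ k * embA p"
definition bmono :: "int \<Rightarrow> A \<Rightarrow> freealg" where
  "bmono n p = (if 0 \<le> n then monoX (nat n) p else monoY (nat (- n)) p)"

lemma sc_comm3: "sc c * (a * b) = a * (sc c * b)"
  by (metis mult.assoc sc_central)

lemma monoX_add: "monoX k (p + p') = monoX k p + monoX k p'"
  by (simp add: monoX_def embA_add distrib_left)
lemma monoY_add: "monoY k (p + p') = monoY k p + monoY k p'"
  by (simp add: monoY_def embA_add distrib_left)
lemma monoX_diff: "monoX k (p - p') = monoX k p - monoX k p'"
  by (simp add: monoX_def embA_diff algebra_simps)
lemma monoY_diff: "monoY k (p - p') = monoY k p - monoY k p'"
  by (simp add: monoY_def embA_diff algebra_simps)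
lemma monoX_C: "monoX k (C c * p) = sc c * monoX k p"
  by (simp add: monoX_def embA_C sc_comm3)
lemma monoY_C: "monoY k (C c * p) = sc c * monoY k p"
  by (simp add: monoY_def embA_C sc_comm3)
lemma bmono_add: "bmono n (p + p') = bmono n p + bmono n p'"
  by (simp add: bmono_def monoX_add monoY_add)
lemma bmono_diff: "bmono n (p - p') = bmono n p - bmono n p'"
  by (simp add: bmono_def monoX_diff monoY_diff)
lemma bmono_C: "bmono n (C c * p) = sc c * bmono n p"
  by (simp add: bmono_def monoX_C monoY_C)
lemma bmono_0[simp]: "bmono n 0 = 0"
  by (simp add: bmono_def monoX_def monoY_def)
lemma bmono_uminus: "bmono n (- p) = - bmono n p"
  using bmono_diff[of n 0 p] by simp

lemma sc_1m: "sc (1 - a) * x = x - sc a * x"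
  by (metis sc_1 sc_diff left_diff_distrib mult_1)

lemma beq_relI: "r \<in> bsl_rels q \<Longrightarrow> r = a - b \<Longrightarrow> beq q a b"
  by (simp add: beq_def rI)

lemma beq_eq: "a = b \<Longrightarrow> beq q a b" by simp

context bsl
begin

lemma c_ux: "beq q (gu * gx) (sc (q^2) * gx * gu)"
  by (rule beq_relI[where r = "gu * gx - sc (q^2) * gx * gu"]) (simp_all add: bsl_rels_def)
lemma c_uy: "beq q (gu * gy) (sc (inverse (q^2)) * gy * gu)"
  by (rule beq_relI[where r = "gu * gy - sc (inverse (q^2)) * gy * gu"]) (simp_all add: bsl_rels_def)
lemma c_xy: "beq q (gx * gy) (gu * gu + sc (1 + inverse (q^2)) * gu * gz - 1)"
  by (rule beq_relI[where r = "gx * gy - (gu * gu + sc (1 + inverse (q^2)) * gu * gz - 1)"]) (simp_all add: bsl_rels_def)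
lemma c_yx: "beq q (gy * gx) (gu * gu + sc (1 + q^2) * gu * gz - 1)"
  by (rule beq_relI[where r = "gy * gx - (gu * gu + sc (1 + q^2) * gu * gz - 1)"]) (simp_all add: bsl_rels_def)

lemma c_wx: "beq q (gw * gx) (gx * gw)"
proof -
  have r6: "gz * gx - (gx * gz + sc (1 - q^2) * gx * gu) \<in> bsl_ideal q" by (rule rI) (simp add: bsl_rels_def)
  have r1: "gu * gx - sc (q^2) * gx * gu \<in> bsl_ideal q" by (rule rI) (simp add: bsl_rels_def)
  have "gw * gx - gx * gw = (gz * gx - (gx * gz + sc (1 - q^2) * gx * gu)) + (gu * gx - sc (q^2) * gx * gu)"
    by (simp add: algebra_simps sc_1m)
  then show ?thesis using bsl_ideal.add[OF r6 r1] by (simp add: beq_def)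
qed

lemma c_wy: "beq q (gw * gy) (gy * gw)"
proof -
  have r7: "gz * gy - (gy * gz + sc (1 - inverse (q^2)) * gy * gu) \<in> bsl_ideal q" by (rule rI) (simp add: bsl_rels_def)
  have r2: "gu * gy - sc (inverse (q^2)) * gy * gu \<in> bsl_ideal q" by (rule rI) (simp add: bsl_rels_def)
  have "gw * gy - gy * gw = (gz * gy - (gy * gz + sc (1 - inverse (q^2)) * gy * gu)) + (gu * gy - sc (inverse (q^2)) * gy * gu)"
    by (simp add: algebra_simps sc_1m)
  then show ?thesis using bsl_ideal.add[OF r7 r2] by (simp add: beq_def)
qed

lemma Qp_int_Suc: "Qp (1 + int k) = q^2 * Qp (int k)"
  using Qp_Suc[of "int k"] by (simp add: add.commute)
lemma Qp_neg_Suc: "Qp (- int (Suc k)) = inverse (q^2) * Qp (- int k)"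
proof -
  have "- int (Suc k) = - int k - 1" by simp
  then show ?thesis using Qp_m1[of "- int k"] by (simp only: mult.commute)
qed

lemma Qp_neg_Suc': "Qp (- 1 - int k) = inverse (q^2) * Qp (- int k)"
  using Qp_neg_Suc[of k] by simp

lemma G_UX: "beq q (gu * monoX k p) (monoX k (C (Qp (int k)) * Uu * p))"
proof (induction k)
  case 0 then show ?case by (simp add: monoX_def embA_U mult.assoc)
next
  case (Suc k)
  have "gu * monoX (Suc k) p = (gu * gx) * monoX k p" by (simp add: monoX_def mult.assoc)
  also have "beq q \<dots> ((sc (q^2) * gx * gu) * monoX k p)" by (intro beq_rmult c_ux)
  also have "(sc (q^2) * gx * gu) * monoX k p = sc (q^2) * gx * (gu * monoX k p)" by (simp add: mult.assoc)
  also have "beq q \<dots> (sc (q^2) * gx * monoX k (C (Qp (int k)) * Uu * p))" by (intro beq_lmult Suc)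
  also have "sc (q^2) * gx * monoX k (C (Qp (int k)) * Uu * p) = monoX (Suc k) (C (Qp (int (Suc k))) * Uu * p)"
  proof -
    have "sc (q^2) * gx * monoX k (C (Qp (int k)) * Uu * p) = gx * (sc (q^2) * monoX k (C (Qp (int k)) * Uu * p))"
      by (metis mult.assoc sc_central)
    also have "\<dots> = gx * monoX k (C (q^2) * (C (Qp (int k)) * Uu * p))"
      by (simp only: monoX_C)
    also have "\<dots> = monoX (Suc k) (C (Qp (int (Suc k))) * Uu * p)"
      by (simp add: monoX_def Qp_int_Suc C_mult mult.assoc)
    finally show ?thesis .
  qed
  finally show ?case .
qed

lemma G_UY: "beq q (gu * monoY k p) (monoY k (C (Qp (- int k)) * Uu * p))"
proof (induction k)
  case 0 then show ?case by (simp add: monoY_def embA_U mult.assoc)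
next
  case (Suc k)
  have "gu * monoY (Suc k) p = (gu * gy) * monoY k p" by (simp add: monoY_def mult.assoc)
  also have "beq q \<dots> ((sc (inverse (q^2)) * gy * gu) * monoY k p)" by (intro beq_rmult c_uy)
  also have "(sc (inverse (q^2)) * gy * gu) * monoY k p = sc (inverse (q^2)) * gy * (gu * monoY k p)" by (simp add: mult.assoc)
  also have "beq q \<dots> (sc (inverse (q^2)) * gy * monoY k (C (Qp (- int k)) * Uu * p))" by (intro beq_lmult Suc)
  also have "sc (inverse (q^2)) * gy * monoY k (C (Qp (- int k)) * Uu * p) = monoY (Suc k) (C (Qp (- int (Suc k))) * Uu * p)"
  proof -
    have "sc (inverse (q^2)) * gy * monoY k (C (Qp (- int k)) * Uu * p) = gy * (sc (inverse (q^2)) * monoY k (C (Qp (- int k)) * Uu * p))"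
      by (metis mult.assoc sc_central)
    also have "\<dots> = gy * monoY k (C (inverse (q^2)) * (C (Qp (- int k)) * Uu * p))"
      by (simp only: monoY_C)
    also have "\<dots> = monoY (Suc k) (C (Qp (- int (Suc k))) * Uu * p)"
      by (simp add: monoY_def Qp_neg_Suc' C_mult mult.assoc)
    finally show ?thesis .
  qed
  finally show ?case .
qed

lemma G_WX: "beq q (gw * monoX k p) (monoX k (Ww * p))"
proof (induction k)
  case 0 then show ?case using embA_W[of q p] by (simp add: monoX_def)
next
  case (Suc k)
  have "gw * monoX (Suc k) p = (gw * gx) * monoX k p" by (simp add: monoX_def mult.assoc)
  also have "beq q \<dots> ((gx * gw) * monoX k p)" by (intro beq_rmult c_wx)
  also have "(gx * gw) * monoX k p = gx * (gw * monoX k p)" by (simp add: mult.assoc)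
  also have "beq q \<dots> (gx * monoX k (Ww * p))" by (intro beq_lmult Suc)
  also have "gx * monoX k (Ww * p) = monoX (Suc k) (Ww * p)" by (simp add: monoX_def mult.assoc)
  finally show ?case .
qed

lemma G_WY: "beq q (gw * monoY k p) (monoY k (Ww * p))"
proof (induction k)
  case 0 then show ?case using embA_W[of q p] by (simp add: monoY_def)
next
  case (Suc k)
  have "gw * monoY (Suc k) p = (gw * gy) * monoY k p" by (simp add: monoY_def mult.assoc)
  also have "beq q \<dots> ((gy * gw) * monoY k p)" by (intro beq_rmult c_wy)
  also have "(gy * gw) * monoY k p = gy * (gw * monoY k p)" by (simp add: mult.assoc)
  also have "beq q \<dots> (gy * monoY k (Ww * p))" by (intro beq_lmult Suc)
  also have "gy * monoY k (Ww * p) = monoY (Suc k) (Ww * p)" by (simp add: monoY_def mult.assoc)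
  finally show ?case .
qed

lemma G_U: "beq q (gu * bmono n p) (bmono n (C (Qp n) * Uu * p))"
proof (cases "0 \<le> n")
  case True
  then obtain k where n: "n = int k" by (metis nonneg_eq_int)
  show ?thesis using G_UX[of k p] unfolding n by (simp add: bmono_def)
next
  case False
  then obtain k where n: "n = - int k" and k: "k > 0" by (metis neg_int_cases of_nat_0_less_iff not_le zero_less_Suc)
  show ?thesis using G_UY[of k p] False unfolding n by (simp add: bmono_def)
qed

lemma G_W: "beq q (gw * bmono n p) (bmono n (Ww * p))"
  by (simp add: bmono_def G_WX G_WY)

lemma G_Z: "beq q (gz * bmono n p) (bmono n ((Ww - C (Qp n) * Uu) * p))"
proof -
  have "gz * bmono n p = gw * bmono n p - gu * bmono n p" by (simp add: algebra_simps)
  also have "beq q \<dots> (bmono n (Ww * p) - bmono n (C (Qp n) * Uu * p))"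
    by (intro beq_diff G_W G_U)
  also have "bmono n (Ww * p) - bmono n (C (Qp n) * Uu * p) = bmono n ((Ww - C (Qp n) * Uu) * p)"
    by (simp add: bmono_diff[symmetric] algebra_simps)
  finally show ?thesis .
qed

lemma bmono_X_up: "0 \<le> n \<Longrightarrow> gx * bmono n p = bmono (n + 1) p"
  by (simp add: bmono_def monoX_def mult.assoc nat_add_distrib)

lemma bmono_Y_down: "n \<le> 0 \<Longrightarrow> gy * bmono n p = bmono (n - 1) p"
proof -
  assume n: "n \<le> 0"
  have "nat (- (n - 1)) = Suc (nat (- n))" using n by simp
  then show ?thesis using n
    by (cases "n = 0") (simp_all add: bmono_def monoY_def monoX_def mult.assoc)
qed

end

context bsl
begin

lemma G_quad:
  assumes "P = gu * gu + sc a * gu * gz - 1"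
  shows "beq q (P * bmono m p)
     (bmono m (C (Qp m) * Uu * (C (Qp m) * Uu * p) + C a * (C (Qp m) * Uu * ((Ww - C (Qp m) * Uu) * p)) - p))"
proof -
  have "P * bmono m p = gu * (gu * bmono m p) + sc a * (gu * (gz * bmono m p)) - bmono m p"
    by (simp add: assms algebra_simps)
  also have "beq q \<dots> (gu * bmono m (C (Qp m) * Uu * p) + sc a * (gu * bmono m ((Ww - C (Qp m) * Uu) * p)) - bmono m p)"
    by (intro beq_diff beq_add beq_lmult G_U G_Z beq_refl)
  also have "beq q \<dots> (bmono m (C (Qp m) * Uu * (C (Qp m) * Uu * p)) + sc a * bmono m (C (Qp m) * Uu * ((Ww - C (Qp m) * Uu) * p)) - bmono m p)"
    by (intro beq_diff beq_add beq_lmult G_U beq_refl)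
  also have "\<dots> = bmono m (C (Qp m) * Uu * (C (Qp m) * Uu * p) + C a * (C (Qp m) * Uu * ((Ww - C (Qp m) * Uu) * p)) - p)"
    by (simp add: bmono_add bmono_diff bmono_C)
  finally show ?thesis .
qed

lemma G_X: "beq q (gx * bmono n p) (bmono (n + 1) (cX (n + 1) * p))"
proof (cases "0 \<le> n")
  case True
  then show ?thesis by (simp add: bmono_X_up cX_def)
next
  case False
  let ?m = "n + 1"
  have m: "?m \<le> 0" using False by simp
  have "bmono n p = gy * bmono ?m p" using bmono_Y_down[OF m, of p] by simp
  then have "gx * bmono n p = (gx * gy) * bmono ?m p" by (simp add: mult.assoc)
  also have "beq q \<dots> ((gu * gu + sc (1 + inverse (q^2)) * gu * gz - 1) * bmono ?m p)"
    by (intro beq_rmult c_xy)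
  also have "beq q \<dots> (bmono ?m (C (Qp ?m) * Uu * (C (Qp ?m) * Uu * p) + C (1 + inverse (q^2)) * (C (Qp ?m) * Uu * ((Ww - C (Qp ?m) * Uu) * p)) - p))"
    by (rule G_quad) simp
  also have "C (Qp ?m) * Uu * (C (Qp ?m) * Uu * p) + C (1 + inverse (q^2)) * (C (Qp ?m) * Uu * ((Ww - C (Qp ?m) * Uu) * p)) - p
      = cX ?m * p"
    using m by (simp add: cX_def S_def Csimps) algebra
  finally show ?thesis .
qed

lemma G_Y: "beq q (gy * bmono n p) (bmono (n - 1) (cY (n - 1) * p))"
proof (cases "n \<le> 0")
  case True
  then show ?thesis by (simp add: bmono_Y_down cY_def)
next
  case False
  define m where "m = n - 1"
  have m: "0 \<le> m" and n: "n = m + 1" using False by (simp_all add: m_def)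
  have "bmono n p = gx * bmono m p" using bmono_X_up[OF m, of p] by (simp add: n)
  then have "gy * bmono n p = (gy * gx) * bmono m p" by (simp add: mult.assoc)
  also have "beq q \<dots> ((gu * gu + sc (1 + q^2) * gu * gz - 1) * bmono m p)"
    by (intro beq_rmult c_yx)
  also have "beq q \<dots> (bmono m (C (Qp m) * Uu * (C (Qp m) * Uu * p) + C (1 + q^2) * (C (Qp m) * Uu * ((Ww - C (Qp m) * Uu) * p)) - p))"
    by (rule G_quad) simp
  also have "C (Qp m) * Uu * (C (Qp m) * Uu * p) + C (1 + q^2) * (C (Qp m) * Uu * ((Ww - C (Qp m) * Uu) * p)) - p
      = cY (n - 1) * p"
    using m qi by (simp add: cY_def S_def n Qp_Suc Csimps) algebra
  finally show ?thesis by (simp add: m_def)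
qed

end

definition dl :: "int \<Rightarrow> A \<Rightarrow> V" where "dl n p = (\<lambda>k. if k = n then p else 0)"

lemma dl_add: "dl n p + dl n p' = dl n (p + p')"
  by (simp add: dl_def fun_eq_iff fun_ops)
lemma csm_dl: "csm c (dl n p) = dl n (C c * p)"
  by (simp add: dl_def fun_eq_iff csm_apply)
lemma dl_0[simp]: "dl n 0 = 0"
  by (simp add: dl_def fun_eq_iff fun_ops)

context bsl
begin

lemma Act_rel0: "r \<in> bsl_rels q \<Longrightarrow> Act r v = 0"
  unfolding bsl_rels_def using rel1 rel2 rel3 rel4 rel5 rel6 rel7 by blast

lemma Act_ideal: "a \<in> bsl_ideal q \<Longrightarrow> Act a v = 0"
proof (induction arbitrary: v rule: bsl_ideal.induct)
  case (rel r) then show ?case by (rule Act_rel0)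
next
  case zero then show ?case by simp
next
  case (add a b) then show ?case by (simp add: Act_add)
next
  case (mult a l r) then show ?case by (simp add: Act_mult linop_0[OF linop_Act])
qed

definition N :: "freealg \<Rightarrow> V" where "N f = Act f (dl 0 1)"

lemma N_add: "N (a + b) = N a + N b" by (simp add: N_def Act_add)
lemma N_diff: "N (a - b) = N a - N b" by (simp add: N_def Act_diff)
lemma N_uminus: "N (- a) = - N a" by (simp add: N_def Act_uminus)
lemma N_mult: "N (a * b) = Act a (N b)" by (simp add: N_def Act_mult)
lemma N_zero[simp]: "N 0 = 0" by (simp add: N_def)

lemma L_dl:
  "L U (dl n p) = dl n (C (Qp n) * Uu * p)"
  "L Z (dl n p) = dl n ((Ww - C (Qp n) * Uu) * p)"
  "L X (dl n p) = dl (n + 1) (cX (n + 1) * p)"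
  "L Y (dl n p) = dl (n - 1) (cY (n - 1) * p)"
  by (auto simp: L_simps dl_def fun_eq_iff)


lemma word_normal: "\<exists>n p. beq q (Poly_Mapping.single (Word gs) 1) (bmono n p) \<and> N (Poly_Mapping.single (Word gs) 1) = dl n p"
proof (induction gs)
  case Nil
  have "bmono 0 1 = 1" by (simp add: bmono_def monoX_def embA_1)
  moreover have "N (Poly_Mapping.single (Word []) 1) = dl 0 1"
    by (simp add: single_word_nil N_def Act_one)
  ultimately show ?case by (intro exI[of _ 0] exI[of _ 1]) (simp add: single_word_nil)
next
  case (Cons g gs)
  then obtain n p where h1: "beq q (Poly_Mapping.single (Word gs) 1) (bmono n p)"
    and h2: "N (Poly_Mapping.single (Word gs) 1) = dl n p" by blast
  have e: "Poly_Mapping.single (Word (g # gs)) 1 = gen_el g * Poly_Mapping.single (Word gs) 1"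
    by (rule single_word_cons)
  have b1: "beq q (Poly_Mapping.single (Word (g # gs)) 1) (gen_el g * bmono n p)"
    unfolding e by (intro beq_lmult h1)
  have n1: "N (Poly_Mapping.single (Word (g # gs)) 1) = L g (dl n p)"
    unfolding e by (simp add: N_mult Act_gen h2)
  show ?case
  proof (cases g)
    case U
    show ?thesis using beq_trans[OF b1[unfolded U] G_U] n1[unfolded U] unfolding U by (auto simp: L_dl)
  next
    case X
    show ?thesis using beq_trans[OF b1[unfolded X] G_X] n1[unfolded X] unfolding X by (auto simp: L_dl)
  next
    case Y
    show ?thesis using beq_trans[OF b1[unfolded Y] G_Y] n1[unfolded Y] unfolding Y by (auto simp: L_dl)
  next
    case Z
    show ?thesis using beq_trans[OF b1[unfolded Z] G_Z] n1[unfolded Z] unfolding Z by (auto simp: L_dl)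
  qed
qed

end

context bsl
begin

lemma N_single: "\<exists>n p. beq q (Poly_Mapping.single w c) (bmono n p) \<and> N (Poly_Mapping.single w c) = dl n p"
proof -
  obtain gs where w: "w = Word gs" by (cases w)
  obtain n p where h1: "beq q (Poly_Mapping.single w 1) (bmono n p)" and h2: "N (Poly_Mapping.single w 1) = dl n p"
    using word_normal[of gs] unfolding w by blast
  have e: "Poly_Mapping.single w c = sc c * Poly_Mapping.single w 1"
    by (simp add: sc_def mult_single)
  have "beq q (Poly_Mapping.single w c) (bmono n (C c * p))"
    unfolding e bmono_C by (intro beq_lmult h1)
  moreover have "N (Poly_Mapping.single w c) = dl n (C c * p)"
    unfolding e by (simp add: N_mult Act_sc h2 csm_dl)
  ultimately show ?thesis by blast
qed

lemma span: "\<exists>S. finite S \<and> (\<forall>n. n \<notin> S \<longrightarrow> N f n = 0) \<and> beq q f (\<Sum>n\<in>S. bmono n (N f n))"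
proof (induction f rule: pm_induct)
  case zero
  show ?case by (intro exI[of _ "{}"]) (simp add: fun_ops)
next
  case (add f w c)
  then obtain S where S: "finite S" "\<And>n. n \<notin> S \<Longrightarrow> N f n = 0" "beq q f (\<Sum>n\<in>S. bmono n (N f n))" by blast
  obtain m p where h1: "beq q (Poly_Mapping.single w c) (bmono m p)" and h2: "N (Poly_Mapping.single w c) = dl m p"
    using N_single by blast
  let ?S = "insert m S"
  have fin: "finite ?S" using S by simp
  have z: "n \<notin> ?S \<Longrightarrow> N (Poly_Mapping.single w c + f) n = 0" for n
    using S(2)[of n] by (simp add: N_add h2 fun_ops dl_def)
  have s1: "(\<Sum>n\<in>?S. bmono n (dl m p n)) = bmono m p"
  proof -
    have "(\<Sum>n\<in>?S. bmono n (dl m p n)) = (\<Sum>n\<in>?S. if n = m then bmono m p else 0)"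
      by (intro sum.cong) (auto simp: dl_def)
    also have "\<dots> = bmono m p" using fin by (simp add: sum.delta')
    finally show ?thesis .
  qed
  have s2: "(\<Sum>n\<in>?S. bmono n (N f n)) = (\<Sum>n\<in>S. bmono n (N f n))"
  proof (cases "m \<in> S")
    case True then show ?thesis by (simp add: insert_absorb)
  next
    case False then show ?thesis using S by simp
  qed
  have "(\<Sum>n\<in>?S. bmono n (N (Poly_Mapping.single w c + f) n))
      = (\<Sum>n\<in>?S. bmono n (dl m p n)) + (\<Sum>n\<in>?S. bmono n (N f n))"
    by (simp add: N_add h2 fun_ops bmono_add sum.distrib)
  also have "\<dots> = bmono m p + (\<Sum>n\<in>S. bmono n (N f n))" by (simp add: s1 s2)
  finally have e: "(\<Sum>n\<in>?S. bmono n (N (Poly_Mapping.single w c + f) n)) = bmono m p + (\<Sum>n\<in>S. bmono n (N f n))" .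
  have "beq q (Poly_Mapping.single w c + f) (\<Sum>n\<in>?S. bmono n (N (Poly_Mapping.single w c + f) n))"
    unfolding e by (intro beq_add h1 S(3))
  then show ?case using fin z by blast
qed

lemma beq_N: "beq q a b \<longleftrightarrow> N a = N b"
proof
  assume "beq q a b"
  then have "Act (a - b) (dl 0 1) = 0" unfolding beq_def by (rule Act_ideal)
  then show "N a = N b" by (simp add: N_def Act_diff)
next
  assume h: "N a = N b"
  obtain S where S: "finite S" "beq q (a - b) (\<Sum>n\<in>S. bmono n (N (a - b) n))"
    using span[of "a - b"] by blast
  have "N (a - b) = 0" using h by (simp add: N_diff)
  then have "beq q (a - b) 0" using S(2) by (simp add: fun_ops)
  then show "beq q a b" by (simp add: beq_def)
qed

lemma N_finite: "\<exists>S. finite S \<and> (\<forall>n. n \<notin> S \<longrightarrow> N f n = 0)"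
  using span by blast

lemma N_embW: "N (embW r) = dl 0 [:r:]"
proof (induction r)
  case 0 then show ?case by simp
next
  case (pCons c r)
  have "N (embW (pCons c r)) = N (sc c) + Act (gz + gu) (N (embW r))"
    by (simp add: embW_pCons N_add N_mult)
  also have "\<dots> = dl 0 (C c + Ww * [:r:])"
    using pCons(2) by (simp add: N_def Act_sc Act_add Act_gen csm_dl L_dl dl_add algebra_simps smult_diff_right)
  also have "C c + Ww * [:r:] = [:pCons c r:]"
  proof -
    have "[:0, 1:] * r = pCons 0 r" by simp
    then show ?thesis by (simp add: C_def Ww_def)
  qed
  finally show ?case .
qed

lemma N_embA: "N (embA p) = dl 0 p"
proof (induction p)
  case 0 then show ?case by simp
next
  case (pCons a p)
  have "N (embA (pCons a p)) = N (embW a) + Act gu (N (embA p))"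
    by (simp add: embA_pCons N_add N_mult)
  also have "\<dots> = dl 0 ([:a:] + Uu * p)"
    using pCons(2) by (simp add: N_embW Act_gen L_dl dl_add)
  also have "[:a:] + Uu * p = pCons a p" by (simp add: Uu_mult)
  finally show ?case .
qed

lemma N_monoX: "N (monoX k p) = dl (int k) p"
proof (induction k)
  case 0 then show ?case by (simp add: monoX_def N_embA)
next
  case (Suc k)
  have "N (monoX (Suc k) p) = Act gx (N (monoX k p))"
    by (simp only: monoX_def N_mult power_Suc mult.assoc)
  also have "\<dots> = dl (int k + 1) (cX (int k + 1) * p)" by (simp only: Suc Act_gen L_dl)
  also have "\<dots> = dl (int (Suc k)) p" by (simp add: cX_def add.commute)
  finally show ?case .
qed

lemma N_monoY: "N (monoY k p) = dl (- int k) p"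
proof (induction k)
  case 0 then show ?case by (simp add: monoY_def N_embA)
next
  case (Suc k)
  have "N (monoY (Suc k) p) = Act gy (N (monoY k p))"
    by (simp only: monoY_def N_mult power_Suc mult.assoc)
  also have "\<dots> = dl (- int k - 1) (cY (- int k - 1) * p)" by (simp only: Suc Act_gen L_dl)
  also have "\<dots> = dl (- int (Suc k)) p"
  proof -
    have "- int k - 1 = - int (Suc k)" by simp
    then show ?thesis by (simp only: cY_def) simp
  qed
  finally show ?case .
qed

lemma N_bmono: "N (bmono n p) = dl n p"
  by (simp add: bmono_def N_monoX N_monoY)

lemma realize: "finite T \<Longrightarrow> (\<forall>n. n \<notin> T \<longrightarrow> m n = 0) \<Longrightarrow> N (\<Sum>n\<in>T. bmono n (m n)) = m"
proof -
  assume T: "finite T" "\<forall>n. n \<notin> T \<longrightarrow> m n = 0"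
  have "N (\<Sum>n\<in>T. bmono n (m n)) = (\<Sum>n\<in>T. dl n (m n))"
    using T(1) by (induction T rule: finite_induct) (simp_all add: N_add N_bmono)
  also have "\<dots> = m"
  proof (rule ext)
    fix k
    have "(\<Sum>n\<in>T. dl n (m n)) k = (\<Sum>n\<in>T. if k = n then m n else 0)"
      by (simp add: vsum_apply dl_def)
    also have "\<dots> = m k" using T by (auto simp: sum.delta)
    finally show "(\<Sum>n\<in>T. dl n (m n)) k = m k" .
  qed
  finally show ?thesis .
qed

lemma realize_ex: "finite T \<Longrightarrow> (\<forall>n. n \<notin> T \<longrightarrow> m n = 0) \<Longrightarrow> \<exists>f. N f = m"
  using realize by blast

end

definition pc :: "complex \<Rightarrow> A \<Rightarrow> A" where "pc c p = pcompose p [:0, [:c:]:]"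

lemma pc_add: "pc c (a + b) = pc c a + pc c b" by (simp add: pc_def pcompose_add)
lemma pc_diff: "pc c (a - b) = pc c a - pc c b" by (simp add: pc_def pcompose_diff)
lemma pc_uminus: "pc c (- a) = - pc c a" by (simp add: pc_def pcompose_uminus)
lemma pc_mult: "pc c (a * b) = pc c a * pc c b" by (simp add: pc_def pcompose_mult)
lemma pc_0[simp]: "pc c 0 = 0" by (simp add: pc_def)
lemma pc_1[simp]: "pc c 1 = 1" by (simp add: pc_def pcompose_1)
lemma pc_C[simp]: "pc c (C a) = C a" by (simp add: pc_def C_def)
lemma pc_Ww[simp]: "pc c Ww = Ww" by (simp add: pc_def Ww_def)
lemma pc_Uu: "pc c Uu = C c * Uu" by (simp add: pc_def Uu_def pcompose_pCons C_def)
lemma pc_power: "pc c (a ^ k) = pc c a ^ k" by (induction k) (simp_all add: pc_mult)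
lemma pc_pc: "pc c (pc d p) = pc (d * c) p"
proof -
  have "pcompose [:0, [:d:]:] [:0, [:c:]:] = [:0, [:d * c:]:]"
    by (simp add: pcompose_pCons)
  then show ?thesis by (simp add: pc_def pcompose_assoc[symmetric])
qed
lemma pc_one_id: "pc 1 p = p"
  by (metis pc_def pcompose_idR one_pCons)

lemmas pcsimps = pc_add pc_diff pc_uminus pc_mult pc_Uu pc_power

context bsl
begin

definition sg :: "A \<Rightarrow> A" where "sg = pc (q^2)"
definition sgi :: "A \<Rightarrow> A" where "sgi = pc (inverse (q^2))"

lemma sg_sgi[simp]: "sg (sgi p) = p"
  using q0 by (simp add: sg_def sgi_def pc_pc pc_one_id)
lemma sgi_sg[simp]: "sgi (sg p) = p"
  using q0 by (simp add: sg_def sgi_def pc_pc pc_one_id)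
lemma sg_inj: "sg a = sg b \<longleftrightarrow> a = b" by (metis sgi_sg)
lemma sgi_inj: "sgi a = sgi b \<longleftrightarrow> a = b" by (metis sg_sgi)
lemma sg_eq0: "sg a = 0 \<longleftrightarrow> a = 0" by (metis sgi_sg pc_0 sg_def)
lemma sgi_eq0: "sgi a = 0 \<longleftrightarrow> a = 0" by (metis sg_sgi pc_0 sgi_def)

lemma sg_S: "sg (S n) = S (n + 1)"
  by (simp add: q0 sg_def S_def pcsimps Qp_Suc Csimps) algebra
lemma sgi_S: "sgi (S (n + 1)) = S n"
  by (metis sgi_sg sg_S)
lemma sgi_S': "sgi (S n) = S (n - 1)"
  using sgi_S[of "n - 1"] by simp

definition Tt :: A where "Tt = S 1"
definition Ss :: A where "Ss = S 0"

lemma sg_Ss: "sg Ss = Tt" using sg_S[of 0] by (simp add: Ss_def Tt_def)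
lemma sgi_Tt: "sgi Tt = Ss" using sgi_S[of 0] by (simp add: Ss_def Tt_def)

definition cxp :: "int \<Rightarrow> A" where "cxp n = (if 1 \<le> n then 1 else Tt)"
definition cyp :: "int \<Rightarrow> A" where "cyp n = (if n \<le> -1 then 1 else Ss)"

definition RX :: "V \<Rightarrow> V" where "RX v = (\<lambda>n. cxp n * sg (v (n - 1)))"
definition RY :: "V \<Rightarrow> V" where "RY v = (\<lambda>n. cyp n * sgi (v (n + 1)))"
definition RU :: "V \<Rightarrow> V" where "RU v = (\<lambda>n. v n * Uu)"

lemma sg_simps: "sg (a + b) = sg a + sg b" "sg (a - b) = sg a - sg b" "sg (a * b) = sg a * sg b"
  "sg (- a) = - sg a" "sg 0 = 0" "sg 1 = 1" "sg (C c) = C c" "sg Ww = Ww" "sg Uu = C (q^2) * Uu"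
  by (simp_all add: sg_def pcsimps)
lemma sgi_simps: "sgi (a + b) = sgi a + sgi b" "sgi (a - b) = sgi a - sgi b" "sgi (a * b) = sgi a * sgi b"
  "sgi (- a) = - sgi a" "sgi 0 = 0" "sgi 1 = 1" "sgi (C c) = C c" "sgi Ww = Ww" "sgi Uu = C (inverse (q^2)) * Uu"
  by (simp_all add: sgi_def pcsimps)

lemma sgi_pow: "sgi (a ^ k) = sgi a ^ k" by (simp add: sgi_def pc_power)
lemma sg_pow: "sg (a ^ k) = sg a ^ k" by (simp add: sg_def pc_power)

lemma linop_RX: "linop RX"
  by (simp add: linop_def RX_def fun_eq_iff fun_ops csm_apply sg_simps algebra_simps)
lemma linop_RY: "linop RY"
  by (simp add: linop_def RY_def fun_eq_iff fun_ops csm_apply sgi_simps algebra_simps)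
lemma linop_RU: "linop RU"
  by (simp add: linop_def RU_def fun_eq_iff fun_ops csm_apply algebra_simps)

lemma comm_RU: "L g (RU v) = RU (L g v)"
  by (cases g) (simp_all add: L_def RU_def fun_eq_iff algebra_simps)

lemma comm_RX: "L g (RX v) = RX (L g v)"
proof (cases g)
  case U then show ?thesis
    using qi by (simp add: L_simps RX_def fun_eq_iff sg_simps Qp_m1 Csimps)
next
  case Z then show ?thesis
    using qi by (simp add: L_simps RX_def fun_eq_iff sg_simps Qp_m1 Csimps)
next
  case X then show ?thesis
    by (auto simp: L_simps RX_def fun_eq_iff sg_simps sg_S cX_def cxp_def Tt_def)
next
  case Y
  have "L Y (RX v) n = RX (L Y v) n" for n
    by (cases "n = 0") (auto simp: L_simps RX_def sg_simps sg_S cY_def cxp_def Tt_def)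
  then show ?thesis using Y by (simp add: fun_eq_iff)
qed

lemma comm_RY: "L g (RY v) = RY (L g v)"
proof (cases g)
  case U then show ?thesis
    using qi by (simp add: L_simps RY_def fun_eq_iff sgi_simps Qp_Suc Csimps sgi_pow mult.commute)
next
  case Z then show ?thesis
    using qi by (simp add: L_simps RY_def fun_eq_iff sgi_simps Qp_Suc Csimps sgi_pow mult.commute)
next
  case X
  have "L X (RY v) n = RY (L X v) n" for n
    by (cases "n = 0") (auto simp: L_simps RY_def sgi_simps sgi_S cX_def cyp_def Ss_def)
  then show ?thesis using X by (simp add: fun_eq_iff)
next
  case Y
  have "L Y (RY v) n = RY (L Y v) n" for n
    by (cases "n = -1") (auto simp: L_simps RY_def sgi_simps sgi_S' cY_def cyp_def Ss_def add.commute)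
  then show ?thesis using Y by (simp add: fun_eq_iff)
qed

end

context bsl
begin

lemma actw_comm:
  assumes "\<And>g v. L g (T v) = T (L g v)"
  shows "actw w (T v) = T (actw w v)"
proof (cases w)
  case (Word gs)
  show ?thesis unfolding Word by (induction gs arbitrary: v) (simp_all add: assms)
qed

lemma Act_comm:
  assumes "\<And>g v. L g (T v) = T (L g v)" and "linop T"
  shows "Act f (T v) = T (Act f v)"
  unfolding Act_def
  by (simp add: actw_comm[OF assms(1)] linop_sum[OF assms(2)] linop_csm[OF assms(2)])

lemma N_gx: "N (a * gx) = RX (N a)"
proof -
  have "L X (dl 0 1) = RX (dl 0 1)"
    by (simp add: L_simps RX_def dl_def fun_eq_iff cX_def cxp_def sg_simps)
  then have "N (gen_el X) = RX (dl 0 1)" by (simp add: N_def Act_gen)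
  then show ?thesis
    by (simp add: N_mult Act_comm[OF comm_RX linop_RX]) (simp add: N_def)
qed

lemma N_gy: "N (a * gy) = RY (N a)"
proof -
  have "L Y (dl 0 1) = RY (dl 0 1)"
    by (simp add: L_simps RY_def dl_def fun_eq_iff cY_def cyp_def sgi_simps)
  then have "N (gen_el Y) = RY (dl 0 1)" by (simp add: N_def Act_gen)
  then show ?thesis
    by (simp add: N_mult Act_comm[OF comm_RY linop_RY]) (simp add: N_def)
qed

lemma N_gu: "N (a * gu) = RU (N a)"
proof -
  have "L U (dl 0 1) = RU (dl 0 1)"
    by (simp add: L_simps RU_def dl_def fun_eq_iff)
  then have "N (gen_el U) = RU (dl 0 1)" by (simp add: N_def Act_gen)
  then show ?thesis
    by (simp add: N_mult Act_comm[OF comm_RU linop_RU]) (simp add: N_def)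
qed

lemma N_sc: "N (a * sc c) = csm c (N a)"
proof -
  have "N (sc c) = csm c (dl 0 1)" by (simp add: N_def Act_sc)
  then show ?thesis by (simp add: N_mult linop_csm[OF linop_Act]) (simp add: N_def)
qed

lemma N_scl: "N (sc c * a) = csm c (N a)"
  by (simp add: N_mult Act_sc)

lemmas Nsimps = N_add N_diff N_uminus N_gx N_gy N_gu N_sc N_scl

lemma N_phi1: "N (phi1 (f, g, h)) = RX (N f) + RY (N g) + RU (N h) - N h"
  by (simp add: phi1_def right_diff_distrib Nsimps)

lemma N_phi2:
  "N (fst (phi2 q (f, g, h))) = RU (csm (inverse (q^2)) (N f)) - N f - RY (N h)"
  "N (fst (snd (phi2 q (f, g, h)))) = RU (csm (q^2) (N g)) - N g + RX (csm (q^2) (N h))"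
  "N (snd (snd (phi2 q (f, g, h)))) = - RX (N f) - RY (N g) + RU (csm (1 - q^2) (N h)) + csm (1 - q^2) (N h)"
  by (simp_all add: phi2_def right_diff_distrib distrib_left mult.assoc[symmetric] Nsimps)

lemma N_phi3:
  "N (fst (phi3 q f)) = RY (N f)"
  "N (fst (snd (phi3 q f))) = - RX (csm (q^2) (N f))"
  "N (snd (snd (phi3 q f))) = RU (N f) - N f"
  by (simp_all add: phi3_def right_diff_distrib mult.assoc[symmetric] Nsimps)

end

context bsl
begin

definition ee :: A where "ee = Uu - 1"
definition aa :: "int \<Rightarrow> A" where "aa n = (if n \<le> 0 then 1 else Tt)"
definition bb :: "int \<Rightarrow> A" where "bb n = (if 0 \<le> n then 1 else Ss)"

lemma aa_cxp: "aa n * cxp n = Tt" by (simp add: aa_def cxp_def)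
lemma bb_cyp: "bb n * cyp n = Ss" by (simp add: bb_def cyp_def)
lemma sgi_aa: "sgi (aa n) = cyp (n - 1)" by (simp add: aa_def cyp_def sgi_simps sgi_Tt)
lemma sg_bb: "sg (bb n) = cxp (n + 1)" by (simp add: bb_def cxp_def sg_simps sg_Ss)
lemma sgi_ee: "sgi ee = C (inverse (q^2)) * Uu - 1" by (simp add: ee_def sgi_simps)
lemma sg_ee: "sg ee = C (q^2) * Uu - 1" by (simp add: ee_def sg_simps)

lemma key: "Tt - C (q^2) * Ss = C (1 - q^2) * (Uu + 1) * ee"
  apply (simp add: Tt_def Ss_def S_def ee_def Csimps q0)
  using qi apply algebra
  done

lemma ee_ne0: "ee \<noteq> 0"
proof
  assume "ee = 0"
  then have "coeff ee 1 = 0" by simp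
  then show False by (simp add: ee_def Uu_def)
qed

lemma PP1: "(RX F + RY G + RU H - H) n = cxp n * sg (F (n - 1)) + cyp n * sgi (G (n + 1)) + ee * H n"
  by (simp add: fun_ops RX_def RY_def RU_def ee_def algebra_simps)

lemma PP2a: "(RU (csm (inverse (q^2)) F) - F - RY H) k = sgi (sg (F k) * ee - aa (k + 1) * H (k + 1))"
  by (simp add: fun_ops RU_def RY_def csm_apply sgi_simps sgi_ee sgi_aa algebra_simps)

lemma PP2b: "(RU (csm (q^2) G) - G + RX (csm (q^2) H)) k = sg (sgi (G k) * ee + C (q^2) * bb (k - 1) * H (k - 1))"
  by (simp add: fun_ops RU_def RX_def csm_apply sg_simps sg_ee sg_bb algebra_simps)

lemma PP2c: "(- RX F - RY G + RU (csm (1 - q^2) H) + csm (1 - q^2) H) n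
   = - cxp n * sg (F (n - 1)) - cyp n * sgi (G (n + 1)) + C (1 - q^2) * (Uu + 1) * H n"
  by (simp add: fun_ops RU_def RX_def RY_def csm_apply algebra_simps)

lemma PP3a: "RY h k = sgi (aa (k + 1) * h (k + 1))"
  by (simp add: RY_def sgi_simps sgi_aa)
lemma PP3b: "(- RX (csm (q^2) h)) k = sg (- C (q^2) * bb (k - 1) * h (k - 1))"
  by (simp add: fun_ops RX_def csm_apply sg_simps sg_bb algebra_simps)
lemma PP3c: "(RU h - h) n = ee * h n"
  by (simp add: fun_ops RU_def ee_def algebra_simps)

end

context bsl
begin

lemma poly_C: "poly (C c) x = [:c:]" by (simp add: C_def)
lemma poly_Uu: "poly Uu x = x" by (simp add: Uu_def)
lemma poly_Ww: "poly Ww x = [:0, 1:]" by (simp add: Ww_def)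

lemma poly_Tt: "poly Tt 1 = [:1 + q^2:] * ([:0, 1:] - 1)"
  using q0 by (simp add: Tt_def S_def poly_C poly_Uu poly_Ww one_pCons field_simps power4_eq_xxxx power2_eq_square)

lemma poly_Ss: "poly Ss 1 = [:inverse (q^2) * (1 + q^2):] * ([:0, 1:] - 1)"
  using q0 by (simp add: Ss_def S_def poly_C poly_Uu poly_Ww one_pCons field_simps power2_eq_square)

lemma poly_ee: "poly ee 1 = 0" by (simp add: ee_def poly_Uu)

lemma ee_pCons: "ee = [:-1, 1:]" by (simp add: ee_def Uu_def one_pCons)

lemma dvd0:
  assumes h: "Tt * \<alpha> + Ss * \<beta> + ee * \<gamma> = 0"
  shows "ee dvd (\<beta> + C (q^2) * \<alpha>)"
proof -
  let ?X = "[:1 + q^2:] * ([:0, 1:] - (1 :: complex poly))"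
  have X: "?X \<noteq> 0"
  proof -
    have "[:0, 1:] - (1 :: complex poly) \<noteq> 0"
    proof
      assume "[:0, 1:] - (1 :: complex poly) = 0"
      then have "coeff ([:0, 1:] - (1 :: complex poly)) 1 = 0" by simp
      then show False by simp
    qed
    then show ?thesis using q2 by simp
  qed
  have "poly (Tt * \<alpha> + Ss * \<beta> + ee * \<gamma>) 1 = 0" using h by simp
  then have "poly Tt 1 * poly \<alpha> 1 + poly Ss 1 * poly \<beta> 1 = 0"
    by (simp only: poly_add poly_mult poly_ee mult_zero_left add_0_right)
  moreover have "[:inverse (q^2) * (1 + q^2):] = [:inverse (q^2):] * [:1 + q^2:]" by simp
  ultimately have "?X * (poly \<alpha> 1 + [:inverse (q^2):] * poly \<beta> 1) = 0"
    unfolding poly_Tt poly_Ss by algebra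
  then have z: "poly \<alpha> 1 + [:inverse (q^2):] * poly \<beta> 1 = 0" using X by simp
  have "poly (\<beta> + C (q^2) * \<alpha>) 1 = [:q^2:] * (poly \<alpha> 1 + [:inverse (q^2):] * poly \<beta> 1)"
    using q0 by (simp add: poly_C algebra_simps)
  then have "poly (\<beta> + C (q^2) * \<alpha>) 1 = 0" using z by simp
  then show ?thesis unfolding ee_pCons using poly_eq_0_iff_dvd[of "\<beta> + C (q^2) * \<alpha>" 1] by simp
qed

end

lemma alg_a: "(e::'a::comm_ring_1) * h = g \<Longrightarrow> a * e - t * g = 0 \<Longrightarrow> e * (t * h) = e * a"
proof -
  assume h1: "e * h = g" and h2: "a * e - t * g = 0"
  have "e * (t * h) = t * (e * h)" by (simp add: mult_ac)
  also have "\<dots> = t * g" using h1 by simp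
  also have "\<dots> = a * e" using h2 by simp
  finally show ?thesis by (simp add: mult.commute)
qed

context bsl
begin

lemma Tt_Ss_C: "C (inverse (q^2)) * C (q^2) = 1"
  using q0 by (simp flip: C_mult)

lemma ee_cancel: "ee * a = ee * b \<Longrightarrow> a = b"
  using ee_ne0 by simp

definition sol_a :: "int \<Rightarrow> A \<Rightarrow> A \<Rightarrow> A \<Rightarrow> A" where
  "sol_a n \<alpha> \<beta> \<gamma> = (if 1 \<le> n then C (inverse (q^2) * (1 - q^2)) * (Uu + 1) * \<beta> - \<gamma> else 0)"
definition sol_b :: "int \<Rightarrow> A \<Rightarrow> A \<Rightarrow> A \<Rightarrow> A \<Rightarrow> A" where
  "sol_b n \<alpha> \<beta> \<gamma> K = (if n \<le> -1 then - C (1 - q^2) * (Uu + 1) * \<alpha> - \<gamma> else if n = 0 then K else 0)"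
definition sol_c :: "int \<Rightarrow> A \<Rightarrow> A \<Rightarrow> A \<Rightarrow> A" where
  "sol_c n \<alpha> \<beta> \<gamma> = (if 1 \<le> n then C (inverse (q^2)) * \<beta> else - \<alpha>)"

lemma D4:
  assumes hyp: "cxp n * \<alpha> + cyp n * \<beta> + ee * \<gamma> = 0"
    and hK: "n = 0 \<Longrightarrow> \<beta> + C (q^2) * \<alpha> = ee * K"
  shows "sol_a n \<alpha> \<beta> \<gamma> * ee - aa n * sol_c n \<alpha> \<beta> \<gamma> = \<alpha>"
    and "sol_b n \<alpha> \<beta> \<gamma> K * ee + C (q^2) * bb n * sol_c n \<alpha> \<beta> \<gamma> = \<beta>"
    and "- cxp n * sol_a n \<alpha> \<beta> \<gamma> - cyp n * sol_b n \<alpha> \<beta> \<gamma> K + C (1 - q^2) * (Uu + 1) * sol_c n \<alpha> \<beta> \<gamma> = \<gamma>"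
proof -
  have k: "Tt = C (q^2) * Ss + C (1 - q^2) * (Uu + 1) * ee" using key by (simp add: algebra_simps)
  have qq: "C (inverse (q^2)) * C (q^2) = 1" by (rule Tt_Ss_C)
  consider (pos) "1 \<le> n" | (zero) "n = 0" | (neg) "n \<le> -1" by linarith
  then have "sol_a n \<alpha> \<beta> \<gamma> * ee - aa n * sol_c n \<alpha> \<beta> \<gamma> = \<alpha> \<and>
    sol_b n \<alpha> \<beta> \<gamma> K * ee + C (q^2) * bb n * sol_c n \<alpha> \<beta> \<gamma> = \<beta> \<and>
    - cxp n * sol_a n \<alpha> \<beta> \<gamma> - cyp n * sol_b n \<alpha> \<beta> \<gamma> K + C (1 - q^2) * (Uu + 1) * sol_c n \<alpha> \<beta> \<gamma> = \<gamma>"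
  proof cases
    case pos
    then have h: "\<alpha> + Ss * \<beta> + ee * \<gamma> = 0" using hyp by (simp add: cxp_def cyp_def)
    show ?thesis using pos
      apply (simp add: sol_a_def sol_b_def sol_c_def aa_def bb_def cxp_def cyp_def C_mult)
      using h k qq apply algebra
      done
  next
    case zero
    then have h: "Tt * \<alpha> + Ss * \<beta> + ee * \<gamma> = 0" and hk: "\<beta> + C (q^2) * \<alpha> = ee * K"
      using hyp hK by (simp_all add: cxp_def cyp_def)
    have 3: "- Ss * K - C (1 - q^2) * (Uu + 1) * \<alpha> = \<gamma>"
    proof (rule ee_cancel)
      show "ee * (- Ss * K - C (1 - q^2) * (Uu + 1) * \<alpha>) = ee * \<gamma>"
        using h hk k by algebra
    qed
    have 2: "K * ee - C (q^2) * \<alpha> = \<beta>" using hk by algebra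
    show ?thesis using zero 3 2
      by (simp add: sol_a_def sol_b_def sol_c_def aa_def bb_def cxp_def cyp_def)
  next
    case neg
    then have h: "Tt * \<alpha> + \<beta> + ee * \<gamma> = 0" using hyp by (simp add: cxp_def cyp_def)
    show ?thesis using neg
      apply (simp add: sol_a_def sol_b_def sol_c_def aa_def bb_def cxp_def cyp_def C_mult)
      using h k qq apply algebra
      done
  qed
  then show "sol_a n \<alpha> \<beta> \<gamma> * ee - aa n * sol_c n \<alpha> \<beta> \<gamma> = \<alpha>"
    and "sol_b n \<alpha> \<beta> \<gamma> K * ee + C (q^2) * bb n * sol_c n \<alpha> \<beta> \<gamma> = \<beta>"
    and "- cxp n * sol_a n \<alpha> \<beta> \<gamma> - cyp n * sol_b n \<alpha> \<beta> \<gamma> K + C (1 - q^2) * (Uu + 1) * sol_c n \<alpha> \<beta> \<gamma> = \<gamma>"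
    by blast+
qed

definition h0 :: "int \<Rightarrow> A \<Rightarrow> A \<Rightarrow> A" where
  "h0 n \<alpha> \<beta> = (if 1 \<le> n then - C (inverse (q^2)) * \<beta> else \<alpha>)"

lemma D5:
  assumes E1: "\<alpha> * ee - aa n * \<gamma> = 0" and E2: "\<beta> * ee + C (q^2) * bb n * \<gamma> = 0"
  shows "aa n * h0 n \<alpha> \<beta> = \<alpha>" and "- C (q^2) * bb n * h0 n \<alpha> \<beta> = \<beta>" and "ee * h0 n \<alpha> \<beta> = \<gamma>"
proof -
  have qq: "C (inverse (q^2)) * C (q^2) = 1" by (rule Tt_Ss_C)
  have "aa n * h0 n \<alpha> \<beta> = \<alpha> \<and> - C (q^2) * bb n * h0 n \<alpha> \<beta> = \<beta> \<and> ee * h0 n \<alpha> \<beta> = \<gamma>"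
  proof (cases "1 \<le> n")
    case True
    then have e1: "\<alpha> * ee - Tt * \<gamma> = 0" and e2: "\<beta> * ee + C (q^2) * \<gamma> = 0"
      using E1 E2 by (simp_all add: aa_def bb_def)
    have c: "ee * h0 n \<alpha> \<beta> = \<gamma>" using True e2 qq
      by (simp add: h0_def) algebra
    have a: "Tt * h0 n \<alpha> \<beta> = \<alpha>"
      by (rule ee_cancel, rule alg_a[OF c e1])
    show ?thesis using True a c qq by (simp add: aa_def bb_def h0_def mult.commute)
  next
    case False
    then have e1: "\<alpha> * ee - \<gamma> = 0" using E1 by (simp add: aa_def)
    have b: "- C (q^2) * bb n * \<alpha> = \<beta>"
    proof (rule ee_cancel)
      show "ee * (- C (q^2) * bb n * \<alpha>) = ee * \<beta>" using e1 E2 by algebra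
    qed
    show ?thesis using False b e1 by (simp add: aa_def h0_def algebra_simps)
  qed
  then show "aa n * h0 n \<alpha> \<beta> = \<alpha>" and "- C (q^2) * bb n * h0 n \<alpha> \<beta> = \<beta>" and "ee * h0 n \<alpha> \<beta> = \<gamma>"
    by blast+
qed

end

lemma shift_fin: "finite {n. v n \<noteq> 0} \<Longrightarrow> finite {n::int. v (n + d) \<noteq> 0}"
proof -
  assume f: "finite {n. v n \<noteq> 0}"
  have "{n::int. v (n + d) \<noteq> 0} \<subseteq> (\<lambda>m. m - d) ` {n. v n \<noteq> 0}"
  proof
    fix n assume "n \<in> {n::int. v (n + d) \<noteq> 0}"
    then show "n \<in> (\<lambda>m. m - d) ` {n. v n \<noteq> 0}" by (intro image_eqI[of _ _ "n + d"]) auto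
  qed
  then show ?thesis using f by (rule finite_subset[OF _ finite_imageI])
qed

lemma shift_fin': "finite {n. v n \<noteq> 0} \<Longrightarrow> finite {n::int. v (n - d) \<noteq> 0}"
  using shift_fin[of v "- d"] by simp

lemma alg_M4': "a * x = (T::A) \<Longrightarrow> b * y = S \<Longrightarrow> T - c * S = k * e \<Longrightarrow>
   x * (al * e - a * g) + y * (be * e + c * b * g) + e * (- x * al - y * be + k * g) = 0"
proof -
  assume h: "a * x = (T::A)" "b * y = S" "T - c * S = k * e"
  have "x * (al * e - a * g) + y * (be * e + c * b * g) + e * (- x * al - y * be + k * g)
     = g * (k * e - (a * x - c * (b * y)))" by (simp add: algebra_simps)
  also have "k * e - (a * x - c * (b * y)) = 0" using h by simp
  finally show ?thesis by simp
qed

lemma alg_M5': "a * x = (T::A) \<Longrightarrow> b * y = S \<Longrightarrow> T - c * S = k * e \<Longrightarrow>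
   - x * (a * h) - y * (- c * b * h) + k * (e * h) = 0"
proof -
  assume hh: "a * x = (T::A)" "b * y = S" "T - c * S = k * e"
  have "- x * (a * h) - y * (- c * b * h) + k * (e * h) = h * (k * e - (a * x - c * (b * y)))"
    by (simp add: algebra_simps)
  also have "k * e - (a * x - c * (b * y)) = 0" using hh by simp
  finally show ?thesis by simp
qed

context bsl
begin

lemma M4:
  assumes hyp: "RX F + RY G + RU H - H = 0"
    and fF: "finite {n. F n \<noteq> 0}" and fG: "finite {n. G n \<noteq> 0}" and fH: "finite {n. H n \<noteq> 0}"
  shows "\<exists>F0 G0 H0. finite {n. F0 n \<noteq> 0} \<and> finite {n. G0 n \<noteq> 0} \<and> finite {n. H0 n \<noteq> 0} \<and>
    RU (csm (inverse (q^2)) F0) - F0 - RY H0 = F \<and>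
    RU (csm (q^2) G0) - G0 + RX (csm (q^2) H0) = G \<and>
    - RX F0 - RY G0 + RU (csm (1 - q^2) H0) + csm (1 - q^2) H0 = H"
proof -
  define \<alpha> where "\<alpha> n = sg (F (n - 1))" for n
  define \<beta> where "\<beta> n = sgi (G (n + 1))" for n
  define \<gamma> where "\<gamma> n = H n" for n
  have h: "cxp n * \<alpha> n + cyp n * \<beta> n + ee * \<gamma> n = 0" for n
    using PP1[of F G H n] hyp by (simp add: \<alpha>_def \<beta>_def \<gamma>_def fun_ops)
  have "ee dvd (\<beta> 0 + C (q^2) * \<alpha> 0)"
    by (rule dvd0) (use h[of 0] in \<open>simp add: cxp_def cyp_def\<close>)
  then obtain K where K: "\<beta> 0 + C (q^2) * \<alpha> 0 = ee * K" by (auto simp: dvd_def)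
  have hK: "n = 0 \<Longrightarrow> \<beta> n + C (q^2) * \<alpha> n = ee * K" for n using K by simp
  define F0 where "F0 k = sgi (sol_a (k + 1) (\<alpha> (k + 1)) (\<beta> (k + 1)) (\<gamma> (k + 1)))" for k
  define G0 where "G0 k = sg (sol_b (k - 1) (\<alpha> (k - 1)) (\<beta> (k - 1)) (\<gamma> (k - 1)) K)" for k
  define H0 where "H0 k = sol_c k (\<alpha> k) (\<beta> k) (\<gamma> k)" for k
  have e1: "RU (csm (inverse (q^2)) F0) - F0 - RY H0 = F"
  proof
    fix k
    have "(RU (csm (inverse (q^2)) F0) - F0 - RY H0) k
        = sgi (sol_a (k + 1) (\<alpha> (k + 1)) (\<beta> (k + 1)) (\<gamma> (k + 1)) * ee - aa (k + 1) * sol_c (k + 1) (\<alpha> (k + 1)) (\<beta> (k + 1)) (\<gamma> (k + 1)))"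
      by (simp add: PP2a F0_def H0_def)
    also have "\<dots> = sgi (\<alpha> (k + 1))" by (simp only: D4(1)[OF h hK])
    also have "\<dots> = F k" by (simp add: \<alpha>_def)
    finally show "(RU (csm (inverse (q^2)) F0) - F0 - RY H0) k = F k" .
  qed
  have e2: "RU (csm (q^2) G0) - G0 + RX (csm (q^2) H0) = G"
  proof
    fix k
    have "(RU (csm (q^2) G0) - G0 + RX (csm (q^2) H0)) k
        = sg (sol_b (k - 1) (\<alpha> (k - 1)) (\<beta> (k - 1)) (\<gamma> (k - 1)) K * ee + C (q^2) * bb (k - 1) * sol_c (k - 1) (\<alpha> (k - 1)) (\<beta> (k - 1)) (\<gamma> (k - 1)))"
      by (simp add: PP2b G0_def H0_def)
    also have "\<dots> = sg (\<beta> (k - 1))" by (simp only: D4(2)[OF h hK])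
    also have "\<dots> = G k" by (simp add: \<beta>_def)
    finally show "(RU (csm (q^2) G0) - G0 + RX (csm (q^2) H0)) k = G k" .
  qed
  have e3: "- RX F0 - RY G0 + RU (csm (1 - q^2) H0) + csm (1 - q^2) H0 = H"
  proof
    fix n
    have "(- RX F0 - RY G0 + RU (csm (1 - q^2) H0) + csm (1 - q^2) H0) n
        = - cxp n * sol_a n (\<alpha> n) (\<beta> n) (\<gamma> n) - cyp n * sol_b n (\<alpha> n) (\<beta> n) (\<gamma> n) K + C (1 - q^2) * (Uu + 1) * sol_c n (\<alpha> n) (\<beta> n) (\<gamma> n)"
      by (simp add: PP2c F0_def G0_def H0_def)
    also have "\<dots> = \<gamma> n" by (rule D4(3)[OF h hK])
    finally show "(- RX F0 - RY G0 + RU (csm (1 - q^2) H0) + csm (1 - q^2) H0) n = H n" by (simp add: \<gamma>_def)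
  qed
  have f1: "finite {k. F0 k \<noteq> 0}"
  proof (rule finite_subset)
    show "{k. F0 k \<noteq> 0} \<subseteq> {k. G (k + 2) \<noteq> 0} \<union> {k. H (k + 1) \<noteq> 0}"
      by (auto simp: F0_def sol_a_def \<beta>_def \<gamma>_def sgi_simps add.assoc)
    show "finite ({k. G (k + 2) \<noteq> 0} \<union> {k. H (k + 1) \<noteq> 0})"
      using shift_fin[OF fG] shift_fin[OF fH] by blast
  qed
  have f2: "finite {k. G0 k \<noteq> 0}"
  proof (rule finite_subset)
    show "{k. G0 k \<noteq> 0} \<subseteq> {k. F (k - 2) \<noteq> 0} \<union> {k. H (k - 1) \<noteq> 0} \<union> {1}"
      by (auto simp: G0_def sol_b_def \<alpha>_def \<gamma>_def sg_simps diff_diff_eq)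
    show "finite ({k. F (k - 2) \<noteq> 0} \<union> {k. H (k - 1) \<noteq> 0} \<union> {1})"
      using shift_fin'[OF fF] shift_fin'[OF fH] by blast
  qed
  have f3: "finite {k. H0 k \<noteq> 0}"
  proof (rule finite_subset)
    show "{k. H0 k \<noteq> 0} \<subseteq> {k. G (k + 1) \<noteq> 0} \<union> {k. F (k - 1) \<noteq> 0}"
      by (auto simp: H0_def sol_c_def \<alpha>_def \<beta>_def sg_simps sgi_simps)
    show "finite ({k. G (k + 1) \<noteq> 0} \<union> {k. F (k - 1) \<noteq> 0})"
      using shift_fin[OF fG] shift_fin'[OF fF] by blast
  qed
  show ?thesis using e1 e2 e3 f1 f2 f3 by blast
qed

end

context bsl
begin

lemma M5:
  assumes z1: "RU (csm (inverse (q^2)) F) - F - RY H = 0"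
    and z2: "RU (csm (q^2) G) - G + RX (csm (q^2) H) = 0"
    and fF: "finite {n. F n \<noteq> 0}" and fG: "finite {n. G n \<noteq> 0}"
  shows "\<exists>h. finite {n. h n \<noteq> 0} \<and> RY h = F \<and> - RX (csm (q^2) h) = G \<and> RU h - h = H"
proof -
  define \<alpha> where "\<alpha> n = sg (F (n - 1))" for n
  define \<beta> where "\<beta> n = sgi (G (n + 1))" for n
  have E1: "\<alpha> n * ee - aa n * H n = 0" for n
  proof -
    have "(RU (csm (inverse (q^2)) F) - F - RY H) (n - 1) = 0" using z1 by (simp add: fun_ops)
    then have "sgi (sg (F (n - 1)) * ee - aa n * H n) = 0" by (simp add: PP2a)
    then show ?thesis by (simp add: sgi_eq0 \<alpha>_def)
  qed
  have E2: "\<beta> n * ee + C (q^2) * bb n * H n = 0" for n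
  proof -
    have "(RU (csm (q^2) G) - G + RX (csm (q^2) H)) (n + 1) = 0" using z2 by (simp add: fun_ops)
    then have "sg (sgi (G (n + 1)) * ee + C (q^2) * bb n * H n) = 0" by (simp add: PP2b)
    then show ?thesis by (simp add: sg_eq0 \<beta>_def)
  qed
  define h where "h k = h0 k (\<alpha> k) (\<beta> k)" for k
  have r1: "RY h = F"
  proof
    fix k
    have "RY h k = sgi (aa (k + 1) * h0 (k + 1) (\<alpha> (k + 1)) (\<beta> (k + 1)))" by (simp add: PP3a h_def)
    also have "\<dots> = sgi (\<alpha> (k + 1))" by (simp only: D5(1)[OF E1 E2])
    also have "\<dots> = F k" by (simp add: \<alpha>_def)
    finally show "RY h k = F k" .
  qed
  have r2: "- RX (csm (q^2) h) = G"
  proof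
    fix k
    have "(- RX (csm (q^2) h)) k = sg (- C (q^2) * bb (k - 1) * h0 (k - 1) (\<alpha> (k - 1)) (\<beta> (k - 1)))" by (simp add: PP3b h_def)
    also have "\<dots> = sg (\<beta> (k - 1))" by (simp only: D5(2)[OF E1 E2])
    also have "\<dots> = G k" by (simp add: \<beta>_def)
    finally show "(- RX (csm (q^2) h)) k = G k" .
  qed
  have r3: "RU h - h = H"
  proof
    fix n
    show "(RU h - h) n = H n" by (simp add: PP3c h_def D5(3)[OF E1 E2])
  qed
  have f: "finite {k. h k \<noteq> 0}"
  proof (rule finite_subset)
    show "{k. h k \<noteq> 0} \<subseteq> {k. G (k + 1) \<noteq> 0} \<union> {k. F (k - 1) \<noteq> 0}"
      by (auto simp: h_def h0_def \<alpha>_def \<beta>_def sg_simps sgi_simps)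
    show "finite ({k. G (k + 1) \<noteq> 0} \<union> {k. F (k - 1) \<noteq> 0})"
      using shift_fin[OF fG] shift_fin'[OF fF] by blast
  qed
  show ?thesis using r1 r2 r3 f by blast
qed

lemma M4':
  "RX (RU (csm (inverse (q^2)) F) - F - RY H) + RY (RU (csm (q^2) G) - G + RX (csm (q^2) H))
   + RU (- RX F - RY G + RU (csm (1 - q^2) H) + csm (1 - q^2) H) - (- RX F - RY G + RU (csm (1 - q^2) H) + csm (1 - q^2) H) = 0"
  (is "?L = 0")
proof
  fix n
  have "?L n = cxp n * (sg (F (n - 1)) * ee - aa n * H n) + cyp n * (sgi (G (n + 1)) * ee + C (q^2) * bb n * H n)
     + ee * (- cxp n * sg (F (n - 1)) - cyp n * sgi (G (n + 1)) + C (1 - q^2) * (Uu + 1) * H n)"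
    by (simp only: PP1 PP2a PP2b PP2c sg_sgi sgi_sg diff_add_cancel add_diff_cancel)
  also have "\<dots> = 0"
    by (rule alg_M4'[OF aa_cxp[of n] bb_cyp[of n] key])
  finally show "?L n = 0 n" by (simp add: fun_ops)
qed

lemma M5':
  "RU (csm (inverse (q^2)) (RY h)) - RY h - RY (RU h - h) = 0"
  "RU (csm (q^2) (- RX (csm (q^2) h))) - (- RX (csm (q^2) h)) + RX (csm (q^2) (RU h - h)) = 0"
  "- RX (RY h) - RY (- RX (csm (q^2) h)) + RU (csm (1 - q^2) (RU h - h)) + csm (1 - q^2) (RU h - h) = 0"
proof -
  show "RU (csm (inverse (q^2)) (RY h)) - RY h - RY (RU h - h) = 0"
  proof
    fix k
    have "(RU (csm (inverse (q^2)) (RY h)) - RY h - RY (RU h - h)) k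
       = sgi (aa (k + 1) * h (k + 1) * ee - aa (k + 1) * (ee * h (k + 1)))"
      by (simp only: PP2a PP3a PP3c sg_sgi)
    then show "(RU (csm (inverse (q^2)) (RY h)) - RY h - RY (RU h - h)) k = 0 k"
      by (simp add: fun_ops algebra_simps sgi_simps)
  qed
  show "RU (csm (q^2) (- RX (csm (q^2) h))) - (- RX (csm (q^2) h)) + RX (csm (q^2) (RU h - h)) = 0"
  proof
    fix k
    have "(RU (csm (q^2) (- RX (csm (q^2) h))) - (- RX (csm (q^2) h)) + RX (csm (q^2) (RU h - h))) k
       = sg (- C (q^2) * bb (k - 1) * h (k - 1) * ee + C (q^2) * bb (k - 1) * (ee * h (k - 1)))"
      by (simp only: PP2b PP3b PP3c sgi_sg)
    then show "(RU (csm (q^2) (- RX (csm (q^2) h))) - (- RX (csm (q^2) h)) + RX (csm (q^2) (RU h - h))) k = 0 k"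
      by (simp add: fun_ops algebra_simps sg_simps)
  qed
  show "- RX (RY h) - RY (- RX (csm (q^2) h)) + RU (csm (1 - q^2) (RU h - h)) + csm (1 - q^2) (RU h - h) = 0"
  proof
    fix n
    have "(- RX (RY h) - RY (- RX (csm (q^2) h)) + RU (csm (1 - q^2) (RU h - h)) + csm (1 - q^2) (RU h - h)) n
      = - cxp n * (aa n * h n) - cyp n * (- C (q^2) * bb n * h n) + C (1 - q^2) * (Uu + 1) * (ee * h n)"
      by (simp add: PP2c PP3a PP3b PP3c)
    also have "\<dots> = 0"
      by (rule alg_M5'[OF aa_cxp[of n] bb_cyp[of n] key])
    finally show "(- RX (RY h) - RY (- RX (csm (q^2) h)) + RU (csm (1 - q^2) (RU h - h)) + csm (1 - q^2) (RU h - h)) n = 0 n"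
      by (simp add: fun_ops)
  qed
qed

lemma M6: "RU h - h = 0 \<Longrightarrow> h = 0"
proof
  fix n
  assume "RU h - h = 0"
  then have "(RU h - h) n = 0" by (simp add: fun_ops)
  then have "ee * h n = 0" by (simp add: PP3c)
  then show "h n = 0 n" using ee_ne0 by (simp add: fun_ops)
qed

end

lemma decomp_single: "\<exists>a b c' d. Poly_Mapping.single (Word gs) c = sc (c * word_eps (Word gs)) + a * gx + b * gy + c' * (gu - 1) + d * gz"
proof (induction gs arbitrary: c)
  case Nil
  show ?case by (intro exI[of _ 0]) (simp add: single_word_nil)
next
  case (Cons g gs)
  obtain a b c' d where h: "Poly_Mapping.single (Word gs) c = sc (c * word_eps (Word gs)) + a * gx + b * gy + c' * (gu - 1) + d * gz"
    using Cons by blast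
  let ?e = "c * word_eps (Word gs)"
  have e1: "Poly_Mapping.single (Word (g # gs)) c = sc ?e * gen_el g + (gen_el g * a) * gx + (gen_el g * b) * gy + (gen_el g * c') * (gu - 1) + (gen_el g * d) * gz"
    by (simp add: single_word_cons h distrib_left mult.assoc sc_central)
  have we: "c * word_eps (Word (g # gs)) = ?e * gen_eps g" by simp
  show ?case
  proof (cases g)
    case U
    have "Poly_Mapping.single (Word (g # gs)) c = sc (c * word_eps (Word (g # gs))) + (gen_el g * a) * gx + (gen_el g * b) * gy + (gen_el g * c' + sc ?e) * (gu - 1) + (gen_el g * d) * gz"
      unfolding e1 by (simp add: U gen_eps_def algebra_simps)
    then show ?thesis by blast
  next
    case X
    have "Poly_Mapping.single (Word (g # gs)) c = sc (c * word_eps (Word (g # gs))) + (gen_el g * a + sc ?e) * gx + (gen_el g * b) * gy + (gen_el g * c') * (gu - 1) + (gen_el g * d) * gz"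
      unfolding e1 by (simp add: X gen_eps_def algebra_simps)
    then show ?thesis by blast
  next
    case Y
    have "Poly_Mapping.single (Word (g # gs)) c = sc (c * word_eps (Word (g # gs))) + (gen_el g * a) * gx + (gen_el g * b + sc ?e) * gy + (gen_el g * c') * (gu - 1) + (gen_el g * d) * gz"
      unfolding e1 by (simp add: Y gen_eps_def algebra_simps)
    then show ?thesis by blast
  next
    case Z
    have "Poly_Mapping.single (Word (g # gs)) c = sc (c * word_eps (Word (g # gs))) + (gen_el g * a) * gx + (gen_el g * b) * gy + (gen_el g * c') * (gu - 1) + (gen_el g * d + sc ?e) * gz"
      unfolding e1 by (simp add: Z gen_eps_def algebra_simps)
    then show ?thesis by blast
  qed
qed

lemma decomp: "\<exists>a b c d. f = sc (eps f) + a * gx + b * gy + c * (gu - 1) + d * gz"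
proof (induction f rule: pm_induct)
  case zero show ?case by (intro exI[of _ 0]) simp
next
  case (add f w c)
  obtain gs where w: "w = Word gs" by (cases w)
  obtain a b c' d where h1: "Poly_Mapping.single w c = sc (c * word_eps w) + a * gx + b * gy + c' * (gu - 1) + d * gz"
    using decomp_single[of gs c] unfolding w by blast
  obtain a2 b2 c2 d2 where h2: "f = sc (eps f) + a2 * gx + b2 * gy + c2 * (gu - 1) + d2 * gz"
    using add by blast
  have "Poly_Mapping.single w c + f = sc (eps (Poly_Mapping.single w c + f)) + (a + a2) * gx + (b + b2) * gy + (c' + c2) * (gu - 1) + (d + d2) * gz"
    apply (subst (1) h1, subst (1) h2)
    apply (simp add: eps_add sc_add[symmetric] algebra_simps)
    done
  then show ?case by blast
qed


lemma sc_mult_assoc: "sc a * (sc b * x) = sc (a * b) * x"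
  by (simp add: mult.assoc[symmetric] sc_mult)

context bsl
begin

lemma eps_phi1: "eps (phi1 v) = 0"
  by (cases v) (simp add: phi1_def eps_add eps_diff eps_mult gen_eps_def)

lemma gz_red: "beq q gz (sc k * gx * gy - (sc k * (gu + 1) + gz) * (gu - 1))"
  if k: "k = inverse (1 + inverse (q^2))"
proof -
  have nz: "1 + inverse (q^2) \<noteq> 0"
  proof -
    have "1 + inverse (q^2) = (1 + q^2) / q^2" using q0 by (simp add: field_simps)
    then show ?thesis using q0 q2 by simp
  qed
  have kk: "k * (1 + inverse (q^2)) = 1" using nz k by simp
  then have kk': "k + k * inverse (q^2) = 1" by (simp add: algebra_simps)
  let ?r3 = "gz * gu - gu * gz"
  let ?r4 = "gx * gy - (gu * gu + sc (1 + inverse (q^2)) * gu * gz - 1)"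
  have r3: "?r3 \<in> bsl_ideal q" by (rule rI) (simp add: bsl_rels_def)
  have r4: "?r4 \<in> bsl_ideal q" by (rule rI) (simp add: bsl_rels_def)
  have "gz - (sc k * gx * gy - (sc k * (gu + 1) + gz) * (gu - 1)) = ?r3 - sc k * ?r4"
    by (simp add: algebra_simps sc_mult_assoc kk kk')
  moreover have "?r3 - sc k * ?r4 \<in> bsl_ideal q" by (intro I_diff r3 I_lmult r4)
  ultimately show ?thesis by (simp add: beq_def)
qed

lemma conj3: "eps f = 0 \<longleftrightarrow> (\<exists>v. beq q f (phi1 v))"
proof
  assume e: "eps f = 0"
  obtain a b c d where f: "f = sc (eps f) + a * gx + b * gy + c * (gu - 1) + d * gz"
    using decomp by blast
  define k where "k = inverse (1 + inverse (q^2))"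
  let ?v = "(a, b + d * sc k * gx, c - d * (sc k * (gu + 1) + gz))"
  have "beq q (d * gz) (d * (sc k * gx * gy - (sc k * (gu + 1) + gz) * (gu - 1)))"
    by (intro beq_lmult gz_red) (simp add: k_def)
  then have "beq q (a * gx + b * gy + c * (gu - 1) + d * gz)
     (a * gx + b * gy + c * (gu - 1) + d * (sc k * gx * gy - (sc k * (gu + 1) + gz) * (gu - 1)))"
    by (intro beq_add beq_refl)
  moreover have "a * gx + b * gy + c * (gu - 1) + d * (sc k * gx * gy - (sc k * (gu + 1) + gz) * (gu - 1)) = phi1 ?v"
    by (simp add: phi1_def algebra_simps)
  moreover have "f = a * gx + b * gy + c * (gu - 1) + d * gz" using f e by simp
  ultimately show "\<exists>v. beq q f (phi1 v)" by auto
next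
  assume "\<exists>v. beq q f (phi1 v)"
  then obtain v where "beq q f (phi1 v)" by blast
  then have "eps (f - phi1 v) = 0" unfolding beq_def by (rule eps_ideal)
  then show "eps f = 0" by (simp add: eps_diff eps_phi1)
qed

end

context bsl
begin

lemma N_fin: "finite {n. N f n \<noteq> 0}"
proof -
  obtain T where T: "finite T" "\<forall>n. n \<notin> T \<longrightarrow> N f n = 0" using N_finite by blast
  then have "{n. N f n \<noteq> 0} \<subseteq> T" by blast
  then show ?thesis using T(1) by (rule finite_subset)
qed

lemma realize_fin: "finite {n. m n \<noteq> 0} \<Longrightarrow> \<exists>f. N f = m"
  by (rule realize_ex[of "{n. m n \<noteq> 0}"]) auto

lemma beq3_N: "beq3 q v w \<longleftrightarrow> N (fst v) = N (fst w) \<and> N (fst (snd v)) = N (fst (snd w)) \<and> N (snd (snd v)) = N (snd (snd w))"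
  by (cases v; cases w) (simp add: beq3_def beq_N)

lemma conj4: "beq q (phi1 v) 0 \<longleftrightarrow> (\<exists>w. beq3 q v (phi2 q w))"
proof -
  obtain f g h where v: "v = (f, g, h)" by (cases v)
  have "beq q (phi1 v) 0 \<longleftrightarrow> RX (N f) + RY (N g) + RU (N h) - N h = 0"
    by (simp add: beq_N v N_phi1)
  also have "\<dots> \<longleftrightarrow> (\<exists>w. beq3 q v (phi2 q w))"
  proof
    assume hyp: "RX (N f) + RY (N g) + RU (N h) - N h = 0"
    obtain F0 G0 H0 where s: "finite {n. F0 n \<noteq> 0}" "finite {n. G0 n \<noteq> 0}" "finite {n. H0 n \<noteq> 0}"
      "RU (csm (inverse (q^2)) F0) - F0 - RY H0 = N f"
      "RU (csm (q^2) G0) - G0 + RX (csm (q^2) H0) = N g"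
      "- RX F0 - RY G0 + RU (csm (1 - q^2) H0) + csm (1 - q^2) H0 = N h"
      using M4[OF hyp N_fin N_fin N_fin] by blast
    obtain f0 where f0: "N f0 = F0" using realize_fin[OF s(1)] by blast
    obtain g0 where g0: "N g0 = G0" using realize_fin[OF s(2)] by blast
    obtain h0 where h0: "N h0 = H0" using realize_fin[OF s(3)] by blast
    have "beq3 q v (phi2 q (f0, g0, h0))"
      unfolding beq3_N using s(4-6) by (simp add: v N_phi2 f0 g0 h0)
    then show "\<exists>w. beq3 q v (phi2 q w)" by blast
  next
    assume "\<exists>w. beq3 q v (phi2 q w)"
    then obtain f0 g0 h0 where w: "beq3 q v (phi2 q (f0, g0, h0))" by (metis prod_cases3)
    then have "N f = RU (csm (inverse (q^2)) (N f0)) - N f0 - RY (N h0)"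
      "N g = RU (csm (q^2) (N g0)) - N g0 + RX (csm (q^2) (N h0))"
      "N h = - RX (N f0) - RY (N g0) + RU (csm (1 - q^2) (N h0)) + csm (1 - q^2) (N h0)"
      unfolding beq3_N by (simp_all add: v N_phi2)
    then show "RX (N f) + RY (N g) + RU (N h) - N h = 0" using M4' by simp
  qed
  finally show ?thesis .
qed

lemma conj5: "beq3 q (phi2 q v) (0, 0, 0) \<longleftrightarrow> (\<exists>f. beq3 q v (phi3 q f))"
proof -
  obtain f g h where v: "v = (f, g, h)" by (cases v)
  show ?thesis
  proof
    assume "beq3 q (phi2 q v) (0, 0, 0)"
    then have z1: "RU (csm (inverse (q^2)) (N f)) - N f - RY (N h) = 0"
      and z2: "RU (csm (q^2) (N g)) - N g + RX (csm (q^2) (N h)) = 0"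
      unfolding beq3_N by (simp_all add: v N_phi2)
    obtain hh where hh: "finite {n. hh n \<noteq> 0}" "RY hh = N f" "- RX (csm (q^2) hh) = N g" "RU hh - hh = N h"
      using M5[OF z1 z2 N_fin N_fin] by blast
    obtain f0 where f0: "N f0 = hh" using realize_fin[OF hh(1)] by blast
    have "beq3 q v (phi3 q f0)" unfolding beq3_N using hh by (simp add: v N_phi3 f0)
    then show "\<exists>f. beq3 q v (phi3 q f)" by blast
  next
    assume "\<exists>f. beq3 q v (phi3 q f)"
    then obtain f0 where w: "beq3 q v (phi3 q f0)" by blast
    then have "N f = RY (N f0)" "N g = - RX (csm (q^2) (N f0))" "N h = RU (N f0) - N f0"
      unfolding beq3_N by (simp_all add: v N_phi3)
    then show "beq3 q (phi2 q v) (0, 0, 0)"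
      unfolding beq3_N using M5'[of "N f0"] by (simp add: v N_phi2)
  qed
qed

lemma conj6: "beq3 q (phi3 q f) (0, 0, 0) \<longleftrightarrow> beq q f 0"
proof
  assume "beq3 q (phi3 q f) (0, 0, 0)"
  then have "RU (N f) - N f = 0" unfolding beq3_N by (simp add: N_phi3)
  then have "N f = 0" by (rule M6)
  then show "beq q f 0" by (simp add: beq_N)
next
  assume "beq q f 0"
  then have "N f = 0" by (simp add: beq_N)
  then show "beq3 q (phi3 q f) (0, 0, 0)"
    unfolding beq3_N by (simp add: N_phi3 linop_0[OF linop_RX] linop_0[OF linop_RY] linop_0[OF linop_RU])
qed

end

theorem mainTheorem13:
  fixes q :: complex
  assumes "q \<noteq> 0"
    and "\<forall>n::nat. n > 0 \<longrightarrow> q ^ n \<noteq> 1"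
  shows "(\<forall>a\<in>bsl_ideal q. eps a = 0)
    \<and> (\<forall>c. \<exists>f. eps f = c)
    \<and> (\<forall>f. eps f = 0 \<longleftrightarrow> (\<exists>v. beq q f (phi1 v)))
    \<and> (\<forall>v. beq q (phi1 v) 0 \<longleftrightarrow> (\<exists>w. beq3 q v (phi2 q w)))
    \<and> (\<forall>v. beq3 q (phi2 q v) (0, 0, 0) \<longleftrightarrow> (\<exists>f. beq3 q v (phi3 q f)))
    \<and> (\<forall>f. beq3 q (phi3 q f) (0, 0, 0) \<longleftrightarrow> beq q f 0)"
proof -
  have q2: "1 + q^2 \<noteq> 0"
  proof
    assume "1 + q^2 = 0"
    then have "q^2 = -1" by (simp add: add_eq_0_iff)
    then have "q^4 = 1" by (metis power_mult numeral_times_numeral num_double power2_minus power_one)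
    then show False using assms(2) by (metis zero_less_numeral)
  qed
  interpret bsl q using assms(1) q2 by unfold_locales
  show ?thesis
    using eps_ideal conj3 conj4 conj5 conj6 by (auto intro: exI[of _ "sc c" for c])
qed


end
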